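(* For every $n\ge1$ there are infinitely many pairwise non-isomorphic tautological algebras.
   Context: Work over $\mathbb{C}$. The Heisenberg group $\mathbb{H}_{2n+1}$ is $\mathbb{W}\times\mathbb{C}$ ($\mathbb{W}$ a $2n$-dimensional space with non-degenerate skew form $\omega$) with law $(w_1,t_1)(w_2,t_2)=(w_1+w_2,t_1+t_2+\tfrac12\omega(w_1,w_2))$; $T=(0,1)$, $\mathbb{I}=\mathbb{C}T$ its center. An $\mathbb{H}_{2n+1}$-structure on $\mathbb{P}V$, $V\cong\mathbb{C}^{2n+2}$, is an effective algebraic action with dense open orbit, whose boundary is a hyperplane $\mathbb{P}V'$. Viewing $\mathbb{H}_{2n+1}\subset\mathbb{P}\mathrm{GL}_{2n+2}(\mathbb{C})$ and with $\pi:\mathrm{GL}_{2n+2}\to\mathbb{P}\mathrm{GL}_{2n+2}$ the projection, the associated algebra $\mathcal{A}$ is the unital associative subalgebra of $\mathrm{Mat}_{2n+2}(\mathbb{C})$ generated by $\pi^{-1}(\mathbb{H}_{2n+1})$. For $o$ in the open orbit let $v=\overline{\mathbb{I}\cdot o}\setminus\mathbb{I}\cdot o$, $\hat v$ a representative, $\widetilde V=V/\mathbb{C}\hat v$; if $T$ fixes $\mathbb{P}V'$ pointwise, the action descends to a $\mathbb{G}_a^{2n}$-structure of $\mathbb{H}_{2n+1}/\mathbb{I}$ on $\mathbb{P}\widetilde V$, called tautological if in suitable coordinates it is $(a_i)\cdot[z_0,\dots,z_{2n}]=[z_0,z_1+a_1z_0,\dots,z_{2n}+a_{2n}z_0]$.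 A tautological algebra is the associated algebra $\mathcal{A}$ of an $\mathbb{H}_{2n+1}$-structure on $\mathbb{P}^{2n+1}$ for which $T$ fixes the boundary pointwise and the induced $\mathbb{G}_a^{2n}$-structure is tautological. Isomorphism means isomorphism of unital associative algebras. *)

theory Defs
  imports Complex_Main "Jordan_Normal_Form.Determinant"
begin

inductive_set polyfun :: "nat \<Rightarrow> ((nat \<Rightarrow> complex) \<Rightarrow> complex) set" for d :: nat where
  pf_const: "(\<lambda>x. c) \<in> polyfun d"
| pf_var: "i < d \<Longrightarrow> (\<lambda>x. x i) \<in> polyfun d"
| pf_add: "p \<in> polyfun d \<Longrightarrow> q \<in> polyfun d \<Longrightarrow> (\<lambda>x. p x + q x) \<in> polyfun d"
| pf_mult: "p \<in> polyfun d \<Longrightarrow> q \<in> polyfun d \<Longrightarrow> (\<lambda>x. p x * q x) \<in> polyfun d"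

definition zariski_closure :: "nat \<Rightarrow> complex vec set \<Rightarrow> complex vec set" where
  "zariski_closure N S = {x \<in> carrier_vec N. \<forall>f \<in> polyfun N.
      (\<forall>y\<in>S. f (\<lambda>i. y $ i) = 0) \<longrightarrow> f (\<lambda>i. x $ i) = 0}"

definition omega :: "nat \<Rightarrow> complex vec \<Rightarrow> complex vec \<Rightarrow> complex" where
  "omega n w1 w2 = (\<Sum>i<n. w1 $ i * w2 $ (n + i) - w1 $ (n + i) * w2 $ i)"

definition heis :: "nat \<Rightarrow> (complex vec \<times> complex) set" where
  "heis n = {(w, t). w \<in> carrier_vec (2 * n)}"

definition heis_mult :: "nat \<Rightarrow> complex vec \<times> complex \<Rightarrow> complex vec \<times> complex \<Rightarrow> complex vec \<times> complex" where
  "heis_mult n g h = (fst g + fst h, snd g + snd h + omega n (fst g) (fst h) / 2)"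

definition heis_one :: "nat \<Rightarrow> complex vec \<times> complex" where
  "heis_one n = (0\<^sub>v (2 * n), 0)"

definition heis_T :: "nat \<Rightarrow> complex vec \<times> complex" where
  "heis_T n = (0\<^sub>v (2 * n), 1)"

definition heis_coords :: "nat \<Rightarrow> complex vec \<times> complex \<Rightarrow> nat \<Rightarrow> complex" where
  "heis_coords n g = (\<lambda>i. if i < 2 * n then fst g $ i else snd g)"

text \<open>An algebraic action H -> PGL_{2n+2} is given by a polynomial lift rho : H -> GL_{2n+2}
  (always exists since H is an affine space), multiplicative up to nonzero scalars.
  The open orbit is the complement of the hyperplane ker l, described on cones in C^{2n+2}.\<close>
definition H_structure :: "nat \<Rightarrow> (complex vec \<times> complex \<Rightarrow> complex mat) \<Rightarrow> complex vec \<Rightarrow> bool" where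
  "H_structure n \<rho> l \<longleftrightarrow>
     (\<forall>g\<in>heis n. \<rho> g \<in> carrier_mat (2*n+2) (2*n+2) \<and> det (\<rho> g) \<noteq> 0) \<and>
     (\<forall>i<2*n+2. \<forall>j<2*n+2. \<exists>p\<in>polyfun (2*n+1). \<forall>g\<in>heis n. \<rho> g $$ (i,j) = p (heis_coords n g)) \<and>
     (\<forall>g\<in>heis n. \<forall>h\<in>heis n. \<exists>c. c \<noteq> 0 \<and> \<rho> (heis_mult n g h) = c \<cdot>\<^sub>m (\<rho> g * \<rho> h)) \<and>
     (\<forall>g\<in>heis n. (\<exists>c. \<rho> g = c \<cdot>\<^sub>m 1\<^sub>m (2*n+2)) \<longrightarrow> g = heis_one n) \<and>
     l \<in> carrier_vec (2*n+2) \<and> l \<noteq> 0\<^sub>v (2*n+2) \<and>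
     (\<exists>x\<in>carrier_vec (2*n+2). x \<noteq> 0\<^sub>v (2*n+2) \<and>
        (\<forall>v\<in>carrier_vec (2*n+2). v \<noteq> 0\<^sub>v (2*n+2) \<longrightarrow>
           ((\<exists>g\<in>heis n. \<exists>c. c \<noteq> 0 \<and> v = c \<cdot>\<^sub>v (\<rho> g *\<^sub>v x)) \<longleftrightarrow> l \<bullet> v \<noteq> 0)))"

text \<open>Cone over the orbit of the centre I = C T through o.\<close>
definition centre_orbit_cone :: "nat \<Rightarrow> (complex vec \<times> complex \<Rightarrow> complex mat) \<Rightarrow> complex vec \<Rightarrow> complex vec set" where
  "centre_orbit_cone n \<rho> pt = {c \<cdot>\<^sub>v (\<rho> (0\<^sub>v (2*n), s) *\<^sub>v pt) | c s. c \<noteq> 0}"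

text \<open>Representatives of the boundary point v of the closure of I.o.\<close>
definition boundary_reps :: "nat \<Rightarrow> (complex vec \<times> complex \<Rightarrow> complex mat) \<Rightarrow> complex vec \<Rightarrow> complex vec set" where
  "boundary_reps n \<rho> pt = {v \<in> zariski_closure (2*n+2) (centre_orbit_cone n \<rho> pt).
       v \<noteq> 0\<^sub>v (2*n+2) \<and> v \<notin> centre_orbit_cone n \<rho> pt}"

definition taut_mat :: "nat \<Rightarrow> complex vec \<Rightarrow> complex mat" where
  "taut_mat n a = mat (2*n+1) (2*n+1)
     (\<lambda>(i,j). if i = j then 1 else if j = 0 \<and> 1 \<le> i then a $ (i - 1) else 0)"

text \<open>The action induced on P(V / C vhat) is tautological: in a basis of V whose first vector
  is vhat, every rho(w,t) preserves C vhat, and its induced action on the quotient equals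
  (up to scalar) the tautological action of L w for a fixed linear isomorphism L : W -> C^{2n}.\<close>
definition induced_tautological :: "nat \<Rightarrow> (complex vec \<times> complex \<Rightarrow> complex mat) \<Rightarrow> complex vec \<Rightarrow> bool" where
  "induced_tautological n \<rho> vh \<longleftrightarrow>
     (\<exists>Q\<in>carrier_mat (2*n+2) (2*n+2). det Q \<noteq> 0 \<and> col Q 0 = vh \<and>
      (\<exists>L\<in>carrier_mat (2*n) (2*n). det L \<noteq> 0 \<and>
        (\<forall>g\<in>heis n. \<exists>M\<in>carrier_mat (2*n+2) (2*n+2). \<exists>c. c \<noteq> 0 \<and> \<rho> g * Q = Q * M \<and>
            (\<forall>i. 1 \<le> i \<and> i < 2*n+2 \<longrightarrow> M $$ (i, 0) = 0) \<and>
            (\<forall>i j. 1 \<le> i \<and> i < 2*n+2 \<and> 1 \<le> j \<and> j < 2*n+2 \<longrightarrow>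
                 M $$ (i, j) = c * taut_mat n (L *\<^sub>v fst g) $$ (i - 1, j - 1)))))"

inductive_set gen_alg :: "nat \<Rightarrow> complex mat set \<Rightarrow> complex mat set" for N G where
  ga_one: "1\<^sub>m N \<in> gen_alg N G"
| ga_gen: "A \<in> G \<Longrightarrow> A \<in> gen_alg N G"
| ga_add: "A \<in> gen_alg N G \<Longrightarrow> B \<in> gen_alg N G \<Longrightarrow> A + B \<in> gen_alg N G"
| ga_mult: "A \<in> gen_alg N G \<Longrightarrow> B \<in> gen_alg N G \<Longrightarrow> A * B \<in> gen_alg N G"
| ga_smult: "A \<in> gen_alg N G \<Longrightarrow> c \<cdot>\<^sub>m A \<in> gen_alg N G"

definition assoc_algebra :: "nat \<Rightarrow> (complex vec \<times> complex \<Rightarrow> complex mat) \<Rightarrow> complex mat set" where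
  "assoc_algebra n \<rho> = gen_alg (2*n+2) {c \<cdot>\<^sub>m \<rho> g | c g. c \<noteq> 0 \<and> g \<in> heis n}"

definition tautological_algebra :: "nat \<Rightarrow> complex mat set \<Rightarrow> bool" where
  "tautological_algebra n A \<longleftrightarrow>
     (\<exists>\<rho> l. H_structure n \<rho> l \<and>
        (\<forall>v\<in>carrier_vec (2*n+2). l \<bullet> v = 0 \<longrightarrow> (\<exists>c. \<rho> (heis_T n) *\<^sub>v v = c \<cdot>\<^sub>v v)) \<and>
        (\<forall>pt\<in>carrier_vec (2*n+2). l \<bullet> pt \<noteq> 0 \<longrightarrow>
           boundary_reps n \<rho> pt \<noteq> {} \<and>
           (\<forall>vh\<in>boundary_reps n \<rho> pt. induced_tautological n \<rho> vh)) \<and>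
        A = assoc_algebra n \<rho>)"

definition alg_iso :: "nat \<Rightarrow> complex mat set \<Rightarrow> complex mat set \<Rightarrow> bool" where
  "alg_iso N A B \<longleftrightarrow> (\<exists>f. bij_betw f A B \<and>
     (\<forall>x\<in>A. \<forall>y\<in>A. f (x + y) = f x + f y \<and> f (x * y) = f x * f y) \<and>
     (\<forall>c. \<forall>x\<in>A. f (c \<cdot>\<^sub>m x) = c \<cdot>\<^sub>m f x) \<and> f (1\<^sub>m N) = 1\<^sub>m N)"

end

theory Submission imports Defs begin

lemma sum_double:
  fixes g :: "nat \<Rightarrow> 'a::comm_monoid_add"
  shows "(\<Sum>j<n+n. g j) = (\<Sum>j<n. g j) + (\<Sum>j<n. g (n+j))"
proof -
  have "(\<Sum>j<n+n. g j) = (\<Sum>j\<in>{0..<n}. g j) + (\<Sum>j\<in>{n..<n+n}. g j)"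
    by (simp add: atLeast0LessThan[symmetric] sum.atLeastLessThan_concat)
  also have "(\<Sum>j\<in>{n..<n+n}. g j) = (\<Sum>j\<in>{0..<n}. g (j+n))"
    using sum.shift_bounds_nat_ivl[of g 0 n n] by simp
  finally show ?thesis by (simp add: atLeast0LessThan add.commute)
qed

lemma sum_split_N:
  fixes f :: "nat \<Rightarrow> 'a::comm_monoid_add"
  shows "(\<Sum>j\<in>{0..<2*n+2}. f j) = f 0 + (\<Sum>q<n. f (q+1)) + (\<Sum>q<n. f (n+q+1)) + f (2*n+1)"
proof -
  have a: "(\<Sum>j\<in>{0..<2*n+2}. f j) = (\<Sum>j<Suc (Suc (n+n)). f j)"
    by (simp add: atLeast0LessThan mult_2)
  also have "\<dots> = f 0 + (\<Sum>j<Suc (n+n). f (Suc j))"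
    by (rule sum.lessThan_Suc_shift)
  also have "(\<Sum>j<Suc (n+n). f (Suc j)) = (\<Sum>j<n+n. f (Suc j)) + f (Suc (n+n))" by simp
  also have "(\<Sum>j<n+n. f (Suc j)) = (\<Sum>q<n. f (q+1)) + (\<Sum>q<n. f (n+q+1))"
    by (simp add: sum_double)
  finally show ?thesis by (simp add: mult_2 add_ac)
qed

definition Bf :: "nat \<Rightarrow> complex \<Rightarrow> complex vec \<Rightarrow> complex vec \<Rightarrow> complex" where
  "Bf n a x y = a * (\<Sum>q<n. x$(q+1) * y$(n+q+1)) + (a-1) * (\<Sum>q<n. x$(n+q+1) * y$(q+1))"

definition pr :: "nat \<Rightarrow> complex \<Rightarrow> complex vec \<Rightarrow> complex vec \<Rightarrow> complex vec" where
  "pr n a x y = vec (2*n+2) (\<lambda>i. if i = 0 then x$0 * y$0 else if i \<le> 2*n then x$0 * y$i + y$0 * x$i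
      else x$0 * y$(2*n+1) + y$0 * x$(2*n+1) + Bf n a x y)"

definition Lent :: "nat \<Rightarrow> complex \<Rightarrow> (nat \<Rightarrow> complex) \<Rightarrow> nat \<Rightarrow> nat \<Rightarrow> complex" where
  "Lent n a x i j = (if i = 0 then (if j = 0 then x 0 else 0)
    else if i \<le> 2*n then (if j = 0 then x i else if j = i then x 0 else 0)
    else (if j = 0 then x (2*n+1) else if j \<le> n then (a-1) * x (n+j)
          else if j \<le> 2*n then a * x (j-n) else x 0))"

definition Lm :: "nat \<Rightarrow> complex \<Rightarrow> complex vec \<Rightarrow> complex mat" where
  "Lm n a x = mat (2*n+2) (2*n+2) (\<lambda>(i,j). Lent n a (\<lambda>m. x$m) i j)"

lemma Lm_carrier[simp]: "Lm n a x \<in> carrier_mat (2*n+2) (2*n+2)"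
  by (simp add: Lm_def)

lemma Lm_carrier'[simp]: "Lm n a x \<in> carrier_mat (Suc (Suc (2*n))) (Suc (Suc (2*n)))"
  by (simp add: Lm_def)

lemma Lm_dims[simp]: "dim_row (Lm n a x) = 2*n+2" "dim_col (Lm n a x) = 2*n+2"
  by (simp_all add: Lm_def)

lemma pr_carrier[simp]: "pr n a x y \<in> carrier_vec (2*n+2)" "dim_vec (pr n a x y) = 2*n+2"
  by (simp_all add: pr_def)

lemma pr_index: "i < 2*n+2 \<Longrightarrow> pr n a x y $ i = (if i = 0 then x$0 * y$0 else if i \<le> 2*n then x$0 * y$i + y$0 * x$i
      else x$0 * y$(2*n+1) + y$0 * x$(2*n+1) + Bf n a x y)"
  by (simp add: pr_def)

lemma Lm_mult_vec:
  assumes y: "y \<in> carrier_vec (2*n+2)"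
  shows "Lm n a x *\<^sub>v y = pr n a x y"
proof (rule eq_vecI)
  show "dim_vec (Lm n a x *\<^sub>v y) = dim_vec (pr n a x y)" by simp
  fix i assume i: "i < dim_vec (pr n a x y)"
  hence i': "i < 2*n+2" by simp
  have "(Lm n a x *\<^sub>v y) $ i = (\<Sum>j\<in>{0..<2*n+2}. Lent n a (\<lambda>m. x$m) i j * y$j)"
    using i' y by (simp add: scalar_prod_def Lm_def row_def)
  also have "\<dots> = pr n a x y $ i"
  proof (cases "i = 0")
    case True
    have "(\<Sum>j\<in>{0..<2*n+2}. Lent n a (\<lambda>m. x$m) i j * y$j) = (\<Sum>j\<in>{0..<2*n+2}. if j = 0 then x$0 * y$0 else 0)"
      by (rule sum.cong) (auto simp: Lent_def True)
    then show ?thesis using True by (simp add: pr_index)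
  next
    case False
    show ?thesis
    proof (cases "i \<le> 2*n")
      case True
      have "(\<Sum>j\<in>{0..<2*n+2}. Lent n a (\<lambda>m. x$m) i j * y$j) = (\<Sum>j\<in>{0..<2*n+2}. (if j = 0 then x$i * y$0 else 0) + (if j = i then x$0 * y$i else 0))"
        by (rule sum.cong) (use False True in \<open>auto simp: Lent_def\<close>)
      also have "\<dots> = x$i * y$0 + x$0 * y$i"
        using i' by (simp add: sum.distrib)
      finally show ?thesis using False True i' by (simp add: pr_index)
    next
      case F2: False
      have ii: "i = 2*n+1" using i' F2 by simp
      have "(\<Sum>j\<in>{0..<2*n+2}. Lent n a (\<lambda>m. x$m) i j * y$j) =
        x$(2*n+1) * y$0 + (\<Sum>q<n. (a-1) * x$(n+q+1) * y$(q+1)) + (\<Sum>q<n. a * x$(q+1) * y$(n+q+1)) + x$0 * y$(2*n+1)"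
        unfolding sum_split_N by (simp add: Lent_def ii)
      also have "\<dots> = pr n a x y $ i"
        using ii by (simp add: pr_index Bf_def sum_distrib_left mult.assoc)
      finally show ?thesis .
    qed
  qed
  finally show "(Lm n a x *\<^sub>v y) $ i = pr n a x y $ i" .
qed


lemma Bf_pr1: "Bf n a (pr n a x y) z = x$0 * Bf n a y z + y$0 * Bf n a x z"
proof -
  have "(\<Sum>q<n. pr n a x y $(q+1) * z$(n+q+1)) = x$0 * (\<Sum>q<n. y$(q+1) * z$(n+q+1)) + y$0 * (\<Sum>q<n. x$(q+1) * z$(n+q+1))"
    by (simp add: pr_index sum_distrib_left sum.distrib[symmetric] algebra_simps)
  moreover have "(\<Sum>q<n. pr n a x y $(n+q+1) * z$(q+1)) = x$0 * (\<Sum>q<n. y$(n+q+1) * z$(q+1)) + y$0 * (\<Sum>q<n. x$(n+q+1) * z$(q+1))"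
    by (simp add: pr_index sum_distrib_left sum.distrib[symmetric] algebra_simps)
  ultimately show ?thesis by (simp add: Bf_def algebra_simps)
qed

lemma Bf_pr2: "Bf n a x (pr n a y z) = y$0 * Bf n a x z + z$0 * Bf n a x y"
proof -
  have "(\<Sum>q<n. x$(q+1) * pr n a y z $(n+q+1)) = y$0 * (\<Sum>q<n. x$(q+1) * z$(n+q+1)) + z$0 * (\<Sum>q<n. x$(q+1) * y$(n+q+1))"
    by (simp add: pr_index sum_distrib_left sum.distrib[symmetric] algebra_simps)
  moreover have "(\<Sum>q<n. x$(n+q+1) * pr n a y z $(q+1)) = y$0 * (\<Sum>q<n. x$(n+q+1) * z$(q+1)) + z$0 * (\<Sum>q<n. x$(n+q+1) * y$(q+1))"
    by (simp add: pr_index sum_distrib_left sum.distrib[symmetric] algebra_simps)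
  ultimately show ?thesis by (simp add: Bf_def algebra_simps)
qed

lemma pr_assoc: "pr n a (pr n a x y) z = pr n a x (pr n a y z)"
  by (rule eq_vecI) (auto simp: pr_index Bf_pr1 Bf_pr2 algebra_simps)

lemma mat_eq_by_vec:
  fixes A B :: "complex mat"
  assumes A: "A \<in> carrier_mat m k" and B: "B \<in> carrier_mat m k"
    and h: "\<And>v. v \<in> carrier_vec k \<Longrightarrow> A *\<^sub>v v = B *\<^sub>v v"
  shows "A = B"
proof (rule eq_matI)
  fix i j assume i: "i < dim_row B" and j: "j < dim_col B"
  have "A $$ (i,j) = (A *\<^sub>v unit_vec k j) $ i"
    using A B i j by (auto simp: scalar_prod_right_unit)
  also have "\<dots> = (B *\<^sub>v unit_vec k j) $ i" using h[of "unit_vec k j"] by simp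
  also have "\<dots> = B $$ (i,j)"
    using A B i j by (auto simp: scalar_prod_right_unit)
  finally show "A $$ (i,j) = B $$ (i,j)" .
qed (use A B in auto)

lemma mat_entry_vec:
  fixes A :: "complex mat"
  assumes A: "A \<in> carrier_mat m k" and "i < m" "j < k"
  shows "A $$ (i,j) = (A *\<^sub>v unit_vec k j) $ i"
  using assms by (auto simp: scalar_prod_right_unit)

lemma Lm_mult:
  assumes "y \<in> carrier_vec (2*n+2)"
  shows "Lm n a x * Lm n a y = Lm n a (pr n a x y)"
proof (rule mat_eq_by_vec[of _ "2*n+2" "2*n+2"])
  fix v :: "complex vec" assume v: "v \<in> carrier_vec (2*n+2)"
  have "Lm n a x * Lm n a y *\<^sub>v v = Lm n a x *\<^sub>v (Lm n a y *\<^sub>v v)"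
    by (rule assoc_mult_mat_vec[OF Lm_carrier Lm_carrier v])
  also have "\<dots> = pr n a (pr n a x y) v" using v by (simp add: Lm_mult_vec Lm_mult_vec[OF pr_carrier(1)] pr_assoc)
  also have "\<dots> = Lm n a (pr n a x y) *\<^sub>v v" using v by (simp add: Lm_mult_vec)
  finally show "Lm n a x * Lm n a y *\<^sub>v v = Lm n a (pr n a x y) *\<^sub>v v" .
qed (use assms in auto)

lemma Lm_add:
  assumes "x \<in> carrier_vec (2*n+2)" "y \<in> carrier_vec (2*n+2)"
  shows "Lm n a x + Lm n a y = Lm n a (x + y)"
  by (rule eq_matI) (use assms in \<open>auto simp: Lm_def Lent_def algebra_simps\<close>)

lemma Lm_smult:
  assumes "x \<in> carrier_vec (2*n+2)"
  shows "c \<cdot>\<^sub>m Lm n a x = Lm n a (c \<cdot>\<^sub>v x)"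
  by (rule eq_matI) (use assms in \<open>auto simp: Lm_def Lent_def algebra_simps\<close>)

lemma Lm_one: "Lm n a (unit_vec (2*n+2) 0) = 1\<^sub>m (2*n+2)"
  by (rule eq_matI) (auto simp: Lm_def Lent_def)

lemma pr_unit0: "x \<in> carrier_vec (2*n+2) \<Longrightarrow> pr n a x (unit_vec (2*n+2) 0) = x"
proof (rule eq_vecI)
  fix i assume "x \<in> carrier_vec (2*n+2)" "i < dim_vec x"
  then show "pr n a x (unit_vec (2*n+2) 0) $ i = x $ i"
    by (cases "i = 2*n+1") (auto simp: pr_index Bf_def)
qed auto

lemma Lm_inj:
  assumes "x \<in> carrier_vec (2*n+2)" "y \<in> carrier_vec (2*n+2)" "Lm n a x = Lm n a y"
  shows "x = y"
  using assms pr_unit0[of x n a] pr_unit0[of y n a] Lm_mult_vec[of "unit_vec (2*n+2) 0" n a]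
  by (metis unit_vec_carrier)


definition Ec :: "nat \<Rightarrow> complex \<Rightarrow> nat \<Rightarrow> (nat \<Rightarrow> complex) \<Rightarrow> complex" where
  "Ec n a m X = (if m = 0 then 1 else if m \<le> 2*n then X (m-1)
     else X (2*n) + (a - 1/2) * (\<Sum>q<n. X q * X (n+q)))"

definition ev :: "nat \<Rightarrow> complex \<Rightarrow> complex vec \<times> complex \<Rightarrow> complex vec" where
  "ev n a g = vec (2*n+2) (\<lambda>m. Ec n a m (heis_coords n g))"

definition rho :: "nat \<Rightarrow> complex \<Rightarrow> complex vec \<times> complex \<Rightarrow> complex mat" where
  "rho n a g = Lm n a (ev n a g)"

definition sq :: "nat \<Rightarrow> complex vec \<Rightarrow> complex" where
  "sq n w = (\<Sum>q<n. w$q * w$(n+q))"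

lemma ev_carrier[simp]: "ev n a g \<in> carrier_vec (2*n+2)" "dim_vec (ev n a g) = 2*n+2"
  by (simp_all add: ev_def)

lemma ev_carrier'[simp]: "ev n a g \<in> carrier_vec (Suc (Suc (2*n)))"
  by (simp add: ev_def)

lemma ev_index: "m < 2*n+2 \<Longrightarrow> ev n a g $ m = (if m = 0 then 1 else if m \<le> 2*n then fst g $ (m-1)
   else snd g + (a - 1/2) * sq n (fst g))"
  by (auto simp: ev_def Ec_def heis_coords_def sq_def)

lemma ev_0[simp]: "ev n a g $ 0 = 1" by (simp add: ev_index)

lemma Bf_ev: "Bf n a (ev n a g) (ev n a h) = a * (\<Sum>q<n. fst g $ q * fst h $ (n+q)) + (a-1) * (\<Sum>q<n. fst g $ (n+q) * fst h $ q)"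
  by (simp add: Bf_def ev_index)

lemma omega_alt: "omega n w v = (\<Sum>q<n. w$q * v$(n+q) - w$(n+q) * v$q)"
  by (simp add: omega_def)

lemma ev_mult:
  assumes g: "g \<in> heis n" and h: "h \<in> heis n"
  shows "ev n a (heis_mult n g h) = pr n a (ev n a g) (ev n a h)"
proof (rule eq_vecI)
  obtain w t where gw: "g = (w,t)" and w: "w \<in> carrier_vec (2*n)" using g by (auto simp: heis_def)
  obtain v s where hv: "h = (v,s)" and v: "v \<in> carrier_vec (2*n)" using h by (auto simp: heis_def)
  fix i assume i: "i < dim_vec (pr n a (ev n a g) (ev n a h))"
  hence i': "i < 2*n+2" by simp
  show "ev n a (heis_mult n g h) $ i = pr n a (ev n a g) (ev n a h) $ i"
  proof (cases "i \<le> 2*n")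
    case True
    then show ?thesis using i' w v by (auto simp: ev_index pr_index heis_mult_def gw hv)
  next
    case False
    hence ii: "i = 2*n+1" using i' by simp
    define c where "c = a - 1/2"
    let ?G = "\<lambda>q. c * ((w$q + v$q) * (w$(n+q) + v$(n+q))) + (w$q * v$(n+q) - w$(n+q) * v$q) / 2"
    have sqwv: "sq n (w + v) = (\<Sum>q<n. (w$q + v$q) * (w$(n+q) + v$(n+q)))"
      unfolding sq_def using w v by (intro sum.cong) auto
    have L: "c * sq n (w + v) + omega n w v / 2 = (\<Sum>q<n. ?G q)"
      unfolding sqwv omega_alt by (simp add: sum.distrib sum_distrib_left sum_divide_distrib)
    have R: "c * sq n v + c * sq n w + (a * (\<Sum>q<n. w$q * v$(n+q)) + (a-1) * (\<Sum>q<n. w$(n+q) * v$q))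
       = (\<Sum>q<n. c * (v$q * v$(n+q)) + c * (w$q * w$(n+q)) + a * (w$q * v$(n+q)) + (a-1) * (w$(n+q) * v$q))"
      by (simp add: sq_def sum.distrib sum_distrib_left)
    have GG: "(\<Sum>q<n. ?G q) = (\<Sum>q<n. c * (v$q * v$(n+q)) + c * (w$q * w$(n+q)) + a * (w$q * v$(n+q)) + (a-1) * (w$(n+q) * v$q))"
      by (rule sum.cong) (simp_all add: c_def field_simps)
    have "ev n a (heis_mult n g h) $ i = t + s + omega n w v / 2 + c * sq n (w + v)"
      using ii by (simp add: ev_index heis_mult_def gw hv c_def)
    also have "\<dots> = (s + c * sq n v) + (t + c * sq n w) + (a * (\<Sum>q<n. w$q * v$(n+q)) + (a-1) * (\<Sum>q<n. w$(n+q) * v$q))"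
    proof -
      have E: "c * sq n (w + v) + omega n w v / 2 = c * sq n v + c * sq n w + (a * (\<Sum>q<n. w$q * v$(n+q)) + (a-1) * (\<Sum>q<n. w$(n+q) * v$q))"
        using L R GG by simp
      have "t + s + omega n w v / 2 + c * sq n (w + v) = t + s + (c * sq n (w + v) + omega n w v / 2)"
        by simp
      also have "\<dots> = t + s + (c * sq n v + c * sq n w + (a * (\<Sum>q<n. w$q * v$(n+q)) + (a-1) * (\<Sum>q<n. w$(n+q) * v$q)))"
        by (simp only: E)
      finally show ?thesis by simp
    qed
    also have "\<dots> = pr n a (ev n a g) (ev n a h) $ i"
      using ii by (simp add: pr_index ev_index Bf_ev gw hv c_def)
    finally show ?thesis .
  qed
qed simp


lemma heis_mult_closed: "g \<in> heis n \<Longrightarrow> h \<in> heis n \<Longrightarrow> heis_mult n g h \<in> heis n"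
  by (auto simp: heis_def heis_mult_def)

lemma rho_carrier[simp]: "rho n a g \<in> carrier_mat (2*n+2) (2*n+2)"
  unfolding rho_def by (rule Lm_carrier)

lemma rho_carrier'[simp]: "rho n a g \<in> carrier_mat (Suc (Suc (2*n))) (Suc (Suc (2*n)))"
  unfolding rho_def by (rule Lm_carrier')

lemma rho_mult: "g \<in> heis n \<Longrightarrow> h \<in> heis n \<Longrightarrow> rho n a (heis_mult n g h) = rho n a g * rho n a h"
  by (simp add: rho_def ev_mult Lm_mult[OF ev_carrier(1)])

lemma ev_one: "ev n a (heis_one n) = unit_vec (2*n+2) 0"
  by (rule eq_vecI) (auto simp: ev_index heis_one_def sq_def)

lemma rho_one: "rho n a (heis_one n) = 1\<^sub>m (2*n+2)"
  unfolding rho_def ev_one by (rule Lm_one)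

lemma rho_det: assumes g: "g \<in> heis n" shows "det (rho n a g) \<noteq> 0"
proof -
  obtain w t where gw: "g = (w,t)" and w: "w \<in> carrier_vec (2*n)" using g by (auto simp: heis_def)
  let ?g' = "(- w, - t)"
  have g': "?g' \<in> heis n" using w by (auto simp: heis_def)
  have om: "omega n w (- w) = 0"
    unfolding omega_alt using w by (intro sum.neutral) auto
  have "heis_mult n g ?g' = heis_one n"
    using w by (auto simp: heis_mult_def heis_one_def gw om)
  hence "rho n a g * rho n a ?g' = 1\<^sub>m (2*n+2)"
    using rho_mult[OF g g', of a] rho_one by simp
  hence "det (rho n a g) * det (rho n a ?g') = 1"
    using det_mult[OF rho_carrier rho_carrier, of n a g a ?g'] by simp
  thus ?thesis by auto
qed

lemma pf_if: "f \<in> polyfun d \<Longrightarrow> g \<in> polyfun d \<Longrightarrow> (\<lambda>X. if P then f X else g X) \<in> polyfun d"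
  by (cases P) auto

lemma pf_sum: "(\<And>q. q \<in> A \<Longrightarrow> f q \<in> polyfun d) \<Longrightarrow> (\<lambda>X. \<Sum>q\<in>A. f q X) \<in> polyfun d"
proof (induction A rule: infinite_finite_induct)
  case (infinite A) then show ?case by (simp add: polyfun.pf_const)
next
  case empty then show ?case by (simp add: polyfun.pf_const)
next
  case (insert x F)
  then show ?case using polyfun.pf_add[of "f x" d "\<lambda>X. \<Sum>q\<in>F. f q X"] by simp
qed

lemma pf_cmult: "f \<in> polyfun d \<Longrightarrow> (\<lambda>X. c * f X) \<in> polyfun d"
  using polyfun.pf_mult[OF polyfun.pf_const[of c] ] by simp

lemma Ec_pf: "(\<lambda>X. Ec n a m X) \<in> polyfun (2*n+1)"
proof -
  have v: "i < 2*n+1 \<Longrightarrow> (\<lambda>X. X i) \<in> polyfun (2*n+1)" for i by (rule polyfun.pf_var)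
  have v': "i < Suc (2*n) \<Longrightarrow> (\<lambda>X. X i) \<in> polyfun (Suc (2*n))" for i by (rule polyfun.pf_var)
  have s: "(\<lambda>X. \<Sum>q<n. X q * X (n+q)) \<in> polyfun (Suc (2*n))"
    by (rule pf_sum) (auto intro!: polyfun.pf_mult v v')
  show ?thesis
  proof (cases "m = 0")
    case True then show ?thesis by (simp add: Ec_def polyfun.pf_const)
  next
    case False
    show ?thesis
    proof (cases "m \<le> 2*n")
      case True then show ?thesis using False by (simp add: Ec_def v')
    next
      case F: False then show ?thesis using False
        using polyfun.pf_add[OF v'[of "2*n"] pf_cmult[OF s, of "a - 1/2"]] by (simp add: Ec_def)
    qed
  qed
qed

lemma Lent_pf: "(\<lambda>X. Lent n a (\<lambda>m. Ec n a m X) i j) \<in> polyfun (2*n+1)"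
  unfolding Lent_def by (intro pf_if polyfun.pf_const Ec_pf pf_cmult)

lemma Lent_cong: "i < 2*n+2 \<Longrightarrow> j < 2*n+2 \<Longrightarrow> (\<And>m. m < 2*n+2 \<Longrightarrow> x m = y m) \<Longrightarrow> Lent n a x i j = Lent n a y i j"
  unfolding Lent_def by auto

lemma rho_entry: "i < 2*n+2 \<Longrightarrow> j < 2*n+2 \<Longrightarrow> rho n a g $$ (i,j) = Lent n a (\<lambda>m. Ec n a m (heis_coords n g)) i j"
  unfolding rho_def Lm_def by (auto intro!: Lent_cong simp: ev_def)

lemma rho_entry2: "i < 2*n+2 \<Longrightarrow> j < 2*n+2 \<Longrightarrow> rho n a g $$ (i,j) = Lent n a (\<lambda>m. ev n a g $ m) i j"
  unfolding rho_def Lm_def by auto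

lemma rho_poly: "\<forall>i<2*n+2. \<forall>j<2*n+2. \<exists>p\<in>polyfun (2*n+1). \<forall>g\<in>heis n. rho n a g $$ (i,j) = p (heis_coords n g)"
proof (intro allI impI)
  fix i j assume i: "i < 2*n+2" and j: "j < 2*n+2"
  show "\<exists>p\<in>polyfun (2*n+1). \<forall>g\<in>heis n. rho n a g $$ (i,j) = p (heis_coords n g)"
    by (rule bexI[OF _ Lent_pf[of n a i j]]) (use rho_entry[OF i j] in simp)
qed

lemma rho_effective:
  assumes g: "g \<in> heis n" and c: "rho n a g = c \<cdot>\<^sub>m 1\<^sub>m (2*n+2)"
  shows "g = heis_one n"
proof -
  obtain w t where gw: "g = (w,t)" and w: "w \<in> carrier_vec (2*n)" using g by (auto simp: heis_def)
  have wq: "w $ q = 0" if q: "q < 2*n" for q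
  proof -
    have "rho n a g $$ (q+1, 0) = 0" using c q by simp
    thus ?thesis using q by (simp add: rho_entry2 Lent_def ev_index gw)
  qed
  hence w0: "w = 0\<^sub>v (2*n)" using w by (intro eq_vecI) auto
  have "rho n a g $$ (2*n+1, 0) = 0" using c by simp
  hence "t = 0" by (simp add: rho_entry2 Lent_def ev_index gw w0 sq_def)
  thus ?thesis by (simp add: gw w0 heis_one_def)
qed


lemma one_smult_m[simp]: "(1::complex) \<cdot>\<^sub>m A = A"
  by (rule eq_matI) auto

lemma rho_e0: "rho n a g *\<^sub>v unit_vec (2*n+2) 0 = ev n a g"
  unfolding rho_def Lm_mult_vec[OF unit_vec_carrier] by (rule pr_unit0[OF ev_carrier(1)])

lemma orbit_char:
  assumes v: "v \<in> carrier_vec (2*n+2)"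
  shows "(\<exists>g\<in>heis n. \<exists>c. c \<noteq> 0 \<and> v = c \<cdot>\<^sub>v (rho n a g *\<^sub>v unit_vec (2*n+2) 0)) \<longleftrightarrow> unit_vec (2*n+2) 0 \<bullet> v \<noteq> 0"
proof -
  have lv: "unit_vec (2*n+2) 0 \<bullet> v = v $ 0" using v by simp
  show ?thesis unfolding lv rho_e0
  proof
    assume "\<exists>g\<in>heis n. \<exists>c. c \<noteq> 0 \<and> v = c \<cdot>\<^sub>v ev n a g"
    then obtain g c where "c \<noteq> 0" "v = c \<cdot>\<^sub>v ev n a g" by blast
    then show "v $ 0 \<noteq> 0" by simp
  next
    assume v0: "v $ 0 \<noteq> 0"
    define w where "w = vec (2*n) (\<lambda>q. v$(q+1) / v$0)"
    define t where "t = v$(2*n+1) / v$0 - (a - 1/2) * sq n w"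
    have g: "(w,t) \<in> heis n" by (simp add: heis_def w_def)
    have "v = v$0 \<cdot>\<^sub>v ev n a (w,t)"
    proof (rule eq_vecI)
      fix i assume "i < dim_vec (v$0 \<cdot>\<^sub>v ev n a (w,t))"
      hence i: "i < 2*n+2" by simp
      show "v $ i = (v$0 \<cdot>\<^sub>v ev n a (w,t)) $ i"
        using i v0 by (cases "i = 2*n+1") (auto simp: ev_index w_def t_def)
    qed (use v in simp)
    then show "\<exists>g\<in>heis n. \<exists>c. c \<noteq> 0 \<and> v = c \<cdot>\<^sub>v ev n a g" using g v0 by blast
  qed
qed

lemma H_struct: "H_structure n (rho n a) (unit_vec (2*n+2) 0)"
  unfolding H_structure_def
proof (intro conjI)
  show "\<forall>g\<in>heis n. rho n a g \<in> carrier_mat (2*n+2) (2*n+2) \<and> det (rho n a g) \<noteq> 0"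
    using rho_det by auto
  show "\<forall>i<2*n+2. \<forall>j<2*n+2. \<exists>p\<in>polyfun (2*n+1). \<forall>g\<in>heis n. rho n a g $$ (i,j) = p (heis_coords n g)"
    by (rule rho_poly)
  show "\<forall>g\<in>heis n. \<forall>h\<in>heis n. \<exists>c. c \<noteq> 0 \<and> rho n a (heis_mult n g h) = c \<cdot>\<^sub>m (rho n a g * rho n a h)"
  proof (intro ballI exI conjI)
    fix g h assume "g \<in> heis n" "h \<in> heis n"
    then show "rho n a (heis_mult n g h) = 1 \<cdot>\<^sub>m (rho n a g * rho n a h)"
      by (simp add: rho_mult)
  qed simp
  show "\<forall>g\<in>heis n. (\<exists>c. rho n a g = c \<cdot>\<^sub>m 1\<^sub>m (2*n+2)) \<longrightarrow> g = heis_one n"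
    using rho_effective by blast
  show "(unit_vec (2*n+2) 0 :: complex vec) \<in> carrier_vec (2*n+2)" by simp
  show "unit_vec (2*n+2) 0 \<noteq> (0\<^sub>v (2*n+2) :: complex vec)"
  proof
    assume "unit_vec (2*n+2) 0 = (0\<^sub>v (2*n+2) :: complex vec)"
    hence "unit_vec (2*n+2) 0 $ 0 = (0\<^sub>v (2*n+2) :: complex vec) $ 0" by simp
    thus False by simp
  qed
  show "\<exists>x\<in>carrier_vec (2*n+2). x \<noteq> 0\<^sub>v (2*n+2) \<and>
        (\<forall>v\<in>carrier_vec (2*n+2). v \<noteq> 0\<^sub>v (2*n+2) \<longrightarrow>
           ((\<exists>g\<in>heis n. \<exists>c. c \<noteq> 0 \<and> v = c \<cdot>\<^sub>v (rho n a g *\<^sub>v x)) \<longleftrightarrow> unit_vec (2*n+2) 0 \<bullet> v \<noteq> 0))"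
  proof (intro bexI conjI ballI impI)
    show "unit_vec (2*n+2) 0 \<noteq> (0\<^sub>v (2*n+2) :: complex vec)"
    proof
      assume "unit_vec (2*n+2) 0 = (0\<^sub>v (2*n+2) :: complex vec)"
      hence "unit_vec (2*n+2) 0 $ 0 = (0\<^sub>v (2*n+2) :: complex vec) $ 0" by simp
      thus False by simp
    qed
    fix v :: "complex vec" assume "v \<in> carrier_vec (2*n+2)"
    then show "(\<exists>g\<in>heis n. \<exists>c. c \<noteq> 0 \<and> v = c \<cdot>\<^sub>v (rho n a g *\<^sub>v unit_vec (2*n+2) 0)) \<longleftrightarrow> unit_vec (2*n+2) 0 \<bullet> v \<noteq> 0"
      by (rule orbit_char)
  qed simp
qed


lemma rho_T_fix:
  assumes v: "v \<in> carrier_vec (2*n+2)" and v0: "v $ 0 = 0"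
  shows "rho n a (heis_T n) *\<^sub>v v = v"
proof -
  have "rho n a (heis_T n) *\<^sub>v v = pr n a (ev n a (heis_T n)) v"
    unfolding rho_def by (rule Lm_mult_vec[OF v])
  also have "\<dots> = v"
  proof (rule eq_vecI)
    fix i assume "i < dim_vec v"
    hence i: "i < 2*n+2" using v by simp
    show "pr n a (ev n a (heis_T n)) v $ i = v $ i"
      using i v0 by (cases "i = 2*n+1") (auto simp: pr_index ev_index heis_T_def sq_def Bf_def)
  qed (use v in simp)
  finally show ?thesis .
qed

lemma rho_centre:
  assumes pt: "pt \<in> carrier_vec (2*n+2)"
  shows "rho n a (0\<^sub>v (2*n), s) *\<^sub>v pt = vec (2*n+2) (\<lambda>i. if i = 2*n+1 then pt$i + s * pt$0 else pt$i)"
proof -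
  have "rho n a (0\<^sub>v (2*n), s) *\<^sub>v pt = pr n a (ev n a (0\<^sub>v (2*n), s)) pt"
    unfolding rho_def by (rule Lm_mult_vec[OF pt])
  also have "\<dots> = vec (2*n+2) (\<lambda>i. if i = 2*n+1 then pt$i + s * pt$0 else pt$i)"
  proof (rule eq_vecI)
    fix i assume "i < dim_vec (vec (2*n+2) (\<lambda>i. if i = 2*n+1 then pt$i + s * pt$0 else pt$i))"
    hence i: "i < 2*n+2" by simp
    show "pr n a (ev n a (0\<^sub>v (2*n), s)) pt $ i = vec (2*n+2) (\<lambda>i. if i = 2*n+1 then pt$i + s * pt$0 else pt$i) $ i"
      using i by (cases "i = 2*n+1") (auto simp: pr_index ev_index sq_def Bf_def)
  qed simp
  finally show ?thesis .
qed

lemma cone_char: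
  assumes pt: "pt \<in> carrier_vec (2*n+2)"
  shows "centre_orbit_cone n (rho n a) pt = {c \<cdot>\<^sub>v vec (2*n+2) (\<lambda>i. if i = 2*n+1 then pt$i + s * pt$0 else pt$i) | c s. c \<noteq> 0}"
  unfolding centre_orbit_cone_def rho_centre[OF pt] ..

lemma pf_local: "p \<in> polyfun d \<Longrightarrow> (\<And>i. i < d \<Longrightarrow> X i = Y i) \<Longrightarrow> p X = p Y"
  by (induction p rule: polyfun.induct) auto

lemma pf_cont: "p \<in> polyfun d \<Longrightarrow> continuous_on UNIV (\<lambda>e::complex. p (\<lambda>i. e * A i + B i))"
  by (induction p rule: polyfun.induct) (auto intro!: continuous_intros)

lemma pf_zero_limit:
  assumes p: "p \<in> polyfun d" and z: "\<And>e. e \<noteq> 0 \<Longrightarrow> p (\<lambda>i. e * A i + B i) = 0"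
  shows "p B = 0"
proof -
  let ?f = "\<lambda>e::complex. p (\<lambda>i. e * A i + B i)"
  have "isCont ?f 0" using pf_cont[OF p, of A B] by (simp add: continuous_on_eq_continuous_at)
  hence l: "(?f \<longlongrightarrow> ?f 0) (at 0)" by (simp add: isCont_def)
  have ev: "eventually (\<lambda>e. 0 = ?f e) (at (0::complex))"
    using z by (auto simp: eventually_at_filter)
  have "((\<lambda>e. 0::complex) \<longlongrightarrow> 0) (at 0)" by simp
  hence "(?f \<longlongrightarrow> 0) (at 0)" using Lim_transform_eventually[OF _ ev] by blast
  hence "?f 0 = 0" using tendsto_unique[OF _ l] by (simp add: at_neq_bot)
  thus ?thesis by simp
qed


lemma unit_vec_nz: "i < k \<Longrightarrow> (unit_vec k i :: complex vec) \<noteq> 0\<^sub>v k"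
proof
  assume "i < k" "(unit_vec k i :: complex vec) = 0\<^sub>v k"
  hence "(unit_vec k i :: complex vec) $ i = 0\<^sub>v k $ i" by simp
  thus False using \<open>i < k\<close> by simp
qed

lemma eL_boundary:
  assumes pt: "pt \<in> carrier_vec (2*n+2)" and p0: "pt $ 0 \<noteq> 0"
  shows "unit_vec (2*n+2) (2*n+1) \<in> boundary_reps n (rho n a) pt"
proof -
  let ?L = "2*n+1"
  let ?eL = "unit_vec (2*n+2) ?L :: complex vec"
  let ?C = "centre_orbit_cone n (rho n a) pt"
  have zar: "?eL \<in> zariski_closure (2*n+2) ?C"
    unfolding zariski_closure_def
  proof (intro CollectI conjI ballI impI)
    show "?eL \<in> carrier_vec (2*n+2)" by simp
    fix f assume f: "f \<in> polyfun (2*n+2)" and van: "\<forall>y\<in>?C. f (\<lambda>i. y $ i) = 0"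
    show "f (\<lambda>i. ?eL $ i) = 0"
    proof (rule pf_zero_limit[OF f, of "\<lambda>i. pt $ i"])
      fix e :: complex assume e: "e \<noteq> 0"
      define s where "s = 1 / (e * pt $ 0)"
      let ?y = "e \<cdot>\<^sub>v vec (2*n+2) (\<lambda>i. if i = 2*n+1 then pt$i + s * pt$0 else pt$i)"
      have yC: "?y \<in> ?C" unfolding cone_char[OF pt] using e by blast
      have "f (\<lambda>i. ?y $ i) = f (\<lambda>i. e * pt $ i + ?eL $ i)"
      proof (rule pf_local[OF f])
        fix i assume i: "i < 2*n+2"
        have es: "e * (s * pt $ 0) = 1" using e p0 by (simp add: s_def)
        show "?y $ i = e * pt $ i + ?eL $ i"
        proof (cases "i = 2*n+1")
          case True then show ?thesis using es by (simp add: distrib_left)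
        next
          case False then show ?thesis using i by simp
        qed
      qed
      thus "f (\<lambda>i. e * pt $ i + ?eL $ i) = 0" using van yC by simp
    qed
  qed
  have nC: "?eL \<notin> ?C"
  proof
    assume "?eL \<in> ?C"
    then obtain c s where c: "c \<noteq> 0" and eq: "?eL = c \<cdot>\<^sub>v vec (2*n+2) (\<lambda>i. if i = 2*n+1 then pt$i + s * pt$0 else pt$i)"
      unfolding cone_char[OF pt] by blast
    have "?eL $ 0 = (c \<cdot>\<^sub>v vec (2*n+2) (\<lambda>i. if i = 2*n+1 then pt$i + s * pt$0 else pt$i)) $ 0"
      using eq by simp
    thus False using c p0 by simp
  qed
  show ?thesis unfolding boundary_reps_def using zar nC unit_vec_nz[of ?L "2*n+2"] by simp
qed

lemma boundary_form:
  assumes pt: "pt \<in> carrier_vec (2*n+2)" and p0: "pt $ 0 \<noteq> 0"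
    and vh: "vh \<in> boundary_reps n (rho n a) pt"
  shows "\<exists>d. d \<noteq> 0 \<and> vh = d \<cdot>\<^sub>v unit_vec (2*n+2) (2*n+1)"
proof -
  let ?C = "centre_orbit_cone n (rho n a) pt"
  have vc: "vh \<in> carrier_vec (2*n+2)" and nz: "vh \<noteq> 0\<^sub>v (2*n+2)" and nC: "vh \<notin> ?C"
    and zar: "\<forall>f\<in>polyfun (2*n+2). (\<forall>y\<in>?C. f (\<lambda>i. y $ i) = 0) \<longrightarrow> f (\<lambda>i. vh $ i) = 0"
    using vh unfolding boundary_reps_def zariski_closure_def by auto
  have rel: "vh $ m * pt $ 0 = pt $ m * vh $ 0" if m: "1 \<le> m" "m \<le> 2*n" for m
  proof -
    let ?f = "\<lambda>X. X m * pt $ 0 + (- pt $ m) * X 0"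
    have vm: "(\<lambda>X. X m) \<in> polyfun (2*n+2)" using m by (intro polyfun.pf_var) simp
    have v0: "(\<lambda>X. X 0) \<in> polyfun (2*n+2)" by (intro polyfun.pf_var) simp
    have fp: "?f \<in> polyfun (2*n+2)"
      by (rule polyfun.pf_add[OF polyfun.pf_mult[OF vm polyfun.pf_const] polyfun.pf_mult[OF polyfun.pf_const v0]])
    have "\<forall>y\<in>?C. ?f (\<lambda>i. y $ i) = 0"
    proof
      fix y assume "y \<in> ?C"
      then obtain c s where y: "y = c \<cdot>\<^sub>v vec (2*n+2) (\<lambda>i. if i = 2*n+1 then pt$i + s * pt$0 else pt$i)"
        unfolding cone_char[OF pt] by blast
      have "y $ m = c * pt $ m" "y $ 0 = c * pt $ 0" using m by (simp_all add: y)
      then show "?f (\<lambda>i. y $ i) = 0" by simp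
    qed
    hence "?f (\<lambda>i. vh $ i) = 0" using mp[OF bspec[OF zar fp]] by simp
    thus ?thesis by (simp add: algebra_simps)
  qed
  have v0: "vh $ 0 = 0"
  proof (rule ccontr)
    assume v0: "vh $ 0 \<noteq> 0"
    define c where "c = vh $ 0 / pt $ 0"
    define s where "s = (vh $ (2*n+1) / c - pt $ (2*n+1)) / pt $ 0"
    have c0: "c \<noteq> 0" using v0 p0 by (simp add: c_def)
    have "vh = c \<cdot>\<^sub>v vec (2*n+2) (\<lambda>i. if i = 2*n+1 then pt$i + s * pt$0 else pt$i)"
    proof (rule eq_vecI)
      fix i assume "i < dim_vec (c \<cdot>\<^sub>v vec (2*n+2) (\<lambda>i. if i = 2*n+1 then pt$i + s * pt$0 else pt$i))"
      hence i: "i < 2*n+2" by simp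
      show "vh $ i = (c \<cdot>\<^sub>v vec (2*n+2) (\<lambda>i. if i = 2*n+1 then pt$i + s * pt$0 else pt$i)) $ i"
      proof (cases "i = 2*n+1")
        case True then show ?thesis using c0 p0 by (simp add: s_def field_simps)
      next
        case False
        show ?thesis
        proof (cases "i = 0")
          case True then show ?thesis using p0 by (simp add: c_def)
        next
          case F0: False
          have "vh $ i * pt $ 0 = pt $ i * vh $ 0" using rel[of i] F0 False i by simp
          then show ?thesis using False F0 i p0 by (simp add: c_def field_simps)
        qed
      qed
    qed (use vc in simp)
    hence "vh \<in> ?C" unfolding cone_char[OF pt] using c0 by blast
    thus False using nC by simp
  qed
  have vm: "vh $ m = 0" if "1 \<le> m" "m \<le> 2*n" for m
    using rel[OF that] v0 p0 by simp
  have eq: "vh = vh $ (2*n+1) \<cdot>\<^sub>v unit_vec (2*n+2) (2*n+1)"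
  proof (rule eq_vecI)
    fix i assume "i < dim_vec (vh $ (2*n+1) \<cdot>\<^sub>v unit_vec (2*n+2) (2*n+1))"
    hence i: "i < 2*n+2" by simp
    show "vh $ i = (vh $ (2*n+1) \<cdot>\<^sub>v unit_vec (2*n+2) (2*n+1)) $ i"
      using i v0 vm[of i] by (cases "i = 0"; cases "i = 2*n+1") auto
  qed (use vc in simp)
  have "vh $ (2*n+1) \<noteq> 0"
  proof
    assume "vh $ (2*n+1) = 0"
    moreover have "(0::complex) \<cdot>\<^sub>v unit_vec (2*n+2) (2*n+1) = 0\<^sub>v (2*n+2)" by (intro eq_vecI) auto
    ultimately have "vh = 0\<^sub>v (2*n+2)" using eq by metis
    thus False using nz by simp
  qed
  thus ?thesis using eq by blast
qed


definition Qm :: "nat \<Rightarrow> complex \<Rightarrow> complex mat" where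
  "Qm n d = mat (2*n+2) (2*n+2) (\<lambda>(i,j). if j = 0 then (if i = 2*n+1 then d else 0) else (if i = j - 1 then 1 else 0))"

definition Qi :: "nat \<Rightarrow> complex \<Rightarrow> complex mat" where
  "Qi n d = mat (2*n+2) (2*n+2) (\<lambda>(i,j). if i = 0 then (if j = 2*n+1 then 1/d else 0) else (if j = i - 1 then 1 else 0))"

lemma Qm_carrier[simp]: "Qm n d \<in> carrier_mat (2*n+2) (2*n+2)" "Qm n d \<in> carrier_mat (Suc (Suc (2*n))) (Suc (Suc (2*n)))"
  by (simp_all add: Qm_def)
lemma Qi_carrier[simp]: "Qi n d \<in> carrier_mat (2*n+2) (2*n+2)" "Qi n d \<in> carrier_mat (Suc (Suc (2*n))) (Suc (Suc (2*n)))"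
  by (simp_all add: Qi_def)

lemma Qm_vec:
  assumes u: "u \<in> carrier_vec (2*n+2)"
  shows "Qm n d *\<^sub>v u = vec (2*n+2) (\<lambda>i. if i = 2*n+1 then d * u$0 else u$(i+1))"
proof (rule eq_vecI)
  fix i assume "i < dim_vec (vec (2*n+2) (\<lambda>i. if i = 2*n+1 then d * u$0 else u$(i+1)))"
  hence i: "i < 2*n+2" by simp
  have "(Qm n d *\<^sub>v u) $ i = (\<Sum>j\<in>{0..<2*n+2}. (if j = 0 then (if i = 2*n+1 then d else 0) else (if i = j - 1 then 1 else 0)) * u$j)"
    using i u by (simp add: Qm_def scalar_prod_def row_def)
  also have "\<dots> = (\<Sum>j\<in>{0..<2*n+2}. (if j = 0 then (if i = 2*n+1 then d else 0) * u$0 else 0) + (if j = i+1 then u$j else 0))"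
    by (rule sum.cong) auto
  also have "\<dots> = (if i = 2*n+1 then d * u$0 else u$(i+1))"
    using i by (auto simp: sum.distrib)
  finally show "(Qm n d *\<^sub>v u) $ i = vec (2*n+2) (\<lambda>i. if i = 2*n+1 then d * u$0 else u$(i+1)) $ i"
    using i by simp
qed (simp add: Qm_def)

lemma Qi_vec:
  assumes u: "u \<in> carrier_vec (2*n+2)"
  shows "Qi n d *\<^sub>v u = vec (2*n+2) (\<lambda>i. if i = 0 then u$(2*n+1) / d else u$(i-1))"
proof (rule eq_vecI)
  fix i assume "i < dim_vec (vec (2*n+2) (\<lambda>i. if i = 0 then u$(2*n+1) / d else u$(i-1)))"
  hence i: "i < 2*n+2" by simp
  have "(Qi n d *\<^sub>v u) $ i = (\<Sum>j\<in>{0..<2*n+2}. (if i = 0 then (if j = 2*n+1 then 1/d else 0) else (if j = i - 1 then 1 else 0)) * u$j)"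
    using i u by (simp add: Qi_def scalar_prod_def row_def)
  also have "\<dots> = (if i = 0 then u$(2*n+1) / d else u$(i-1))"
  proof (cases "i = 0")
    case True
    have "(\<Sum>j\<in>{0..<2*n+2}. (if i = 0 then (if j = 2*n+1 then 1/d else 0) else (if j = i - 1 then 1 else 0)) * u$j)
        = (\<Sum>j\<in>{0..<2*n+2}. if j = 2*n+1 then u$j / d else 0)"
      by (rule sum.cong) (auto simp: True)
    then show ?thesis using True by simp
  next
    case False
    have "(\<Sum>j\<in>{0..<2*n+2}. (if i = 0 then (if j = 2*n+1 then 1/d else 0) else (if j = i - 1 then 1 else 0)) * u$j)
        = (\<Sum>j\<in>{0..<2*n+2}. if j = i - 1 then u$j else 0)"
      by (rule sum.cong) (auto simp: False)
    also have "\<dots> = u$(i-1)" using i by (subst sum.delta[OF finite_atLeastLessThan]) auto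
    finally show ?thesis using False by simp
  qed
  finally show "(Qi n d *\<^sub>v u) $ i = vec (2*n+2) (\<lambda>i. if i = 0 then u$(2*n+1) / d else u$(i-1)) $ i"
    using i by simp
qed (simp add: Qi_def)

lemma QQ: assumes d: "d \<noteq> 0" shows "Qm n d * Qi n d = 1\<^sub>m (2*n+2)"
proof (rule mat_eq_by_vec[of _ "2*n+2" "2*n+2"])
  fix v :: "complex vec" assume v: "v \<in> carrier_vec (2*n+2)"
  have "Qm n d * Qi n d *\<^sub>v v = Qm n d *\<^sub>v (Qi n d *\<^sub>v v)"
    by (rule assoc_mult_mat_vec[OF Qm_carrier(1) Qi_carrier(1) v])
  also have "\<dots> = v"
    unfolding Qi_vec[OF v]
    by (subst Qm_vec) (use d v in \<open>auto intro!: eq_vecI\<close>)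
  finally show "Qm n d * Qi n d *\<^sub>v v = 1\<^sub>m (2*n+2) *\<^sub>v v" using v by simp
qed (rule mult_carrier_mat[OF Qm_carrier(1) Qi_carrier(1)], simp)

lemma Qm_det: assumes d: "d \<noteq> 0" shows "det (Qm n d) \<noteq> 0"
proof -
  have "det (Qm n d) * det (Qi n d) = 1"
    by (simp only: det_mult[OF Qm_carrier(1) Qi_carrier(1), symmetric] QQ[OF d] det_one)
  thus ?thesis by auto
qed

lemma Qm_col: "col (Qm n d) 0 = d \<cdot>\<^sub>v unit_vec (2*n+2) (2*n+1)"
  by (rule eq_vecI) (auto simp: Qm_def)


lemma Qm_unit: "j < 2*n+2 \<Longrightarrow> Qm n d *\<^sub>v unit_vec (2*n+2) j =
   (if j = 0 then d \<cdot>\<^sub>v unit_vec (2*n+2) (2*n+1) else unit_vec (2*n+2) (j-1))"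
  by (subst Qm_vec) (auto intro!: eq_vecI)

lemma M_entry:
  assumes g: "g \<in> heis n" and d: "d \<noteq> 0" and i: "1 \<le> i" "i < 2*n+2" and j: "j < 2*n+2"
  shows "(Qi n d * rho n a g * Qm n d) $$ (i,j) = pr n a (ev n a g) (Qm n d *\<^sub>v unit_vec (2*n+2) j) $ (i-1)"
proof -
  let ?u = "Qm n d *\<^sub>v unit_vec (2*n+2) j"
  have uc: "?u \<in> carrier_vec (2*n+2)" by (rule mult_mat_vec_carrier[OF Qm_carrier(1) unit_vec_carrier])
  have "(Qi n d * rho n a g * Qm n d) $$ (i,j) = (Qi n d * rho n a g * Qm n d *\<^sub>v unit_vec (2*n+2) j) $ i"
    by (rule mat_entry_vec[OF _ i(2) j]) (rule mult_carrier_mat[OF mult_carrier_mat[OF Qi_carrier(1) rho_carrier] Qm_carrier(1)])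
  also have "Qi n d * rho n a g * Qm n d *\<^sub>v unit_vec (2*n+2) j = (Qi n d * rho n a g) *\<^sub>v ?u"
    by (rule assoc_mult_mat_vec[OF mult_carrier_mat[OF Qi_carrier(1) rho_carrier] Qm_carrier(1) unit_vec_carrier])
  also have "\<dots> = Qi n d *\<^sub>v (rho n a g *\<^sub>v ?u)"
    by (rule assoc_mult_mat_vec[OF Qi_carrier(1) rho_carrier uc])
  also have "rho n a g *\<^sub>v ?u = pr n a (ev n a g) ?u"
    unfolding rho_def by (rule Lm_mult_vec[OF uc])
  finally show ?thesis using i by (simp add: Qi_vec[OF pr_carrier(1)])
qed

lemma induced_taut:
  assumes d: "d \<noteq> 0"
  shows "induced_tautological n (rho n a) (d \<cdot>\<^sub>v unit_vec (2*n+2) (2*n+1))"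
  unfolding induced_tautological_def
proof (intro bexI conjI)
  show "Qm n d \<in> carrier_mat (2*n+2) (2*n+2)" by simp
  show "det (Qm n d) \<noteq> 0" by (rule Qm_det[OF d])
  show "col (Qm n d) 0 = d \<cdot>\<^sub>v unit_vec (2*n+2) (2*n+1)" by (rule Qm_col)
  show "1\<^sub>m (2*n) \<in> carrier_mat (2*n) (2*n)" by simp
  show "det (1\<^sub>m (2*n) :: complex mat) \<noteq> 0" by simp
  show "\<forall>g\<in>heis n. \<exists>M\<in>carrier_mat (2*n+2) (2*n+2). \<exists>c. c \<noteq> 0 \<and> rho n a g * Qm n d = Qm n d * M \<and>
            (\<forall>i. 1 \<le> i \<and> i < 2*n+2 \<longrightarrow> M $$ (i, 0) = 0) \<and>
            (\<forall>i j. 1 \<le> i \<and> i < 2*n+2 \<and> 1 \<le> j \<and> j < 2*n+2 \<longrightarrow>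
                 M $$ (i, j) = c * taut_mat n (1\<^sub>m (2*n) *\<^sub>v fst g) $$ (i - 1, j - 1))"
  proof
    fix g assume g: "g \<in> heis n"
    obtain w t where gw: "g = (w,t)" and w: "w \<in> carrier_vec (2*n)" using g by (auto simp: heis_def)
    let ?M = "Qi n d * rho n a g * Qm n d"
    have Mc: "?M \<in> carrier_mat (2*n+2) (2*n+2)"
      by (rule mult_carrier_mat[OF mult_carrier_mat[OF Qi_carrier(1) rho_carrier] Qm_carrier(1)])
    have eq: "rho n a g * Qm n d = Qm n d * ?M"
    proof -
      have in1: "Qm n d * (Qi n d * rho n a g) = rho n a g"
      proof -
        have "Qm n d * (Qi n d * rho n a g) = (Qm n d * Qi n d) * rho n a g"
          by (rule assoc_mult_mat[symmetric, OF Qm_carrier(1) Qi_carrier(1) rho_carrier])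
        also have "\<dots> = rho n a g" unfolding QQ[OF d] by (rule left_mult_one_mat[OF rho_carrier])
        finally show ?thesis .
      qed
      have "Qm n d * ?M = (Qm n d * (Qi n d * rho n a g)) * Qm n d"
        by (rule assoc_mult_mat[symmetric, OF Qm_carrier(1) mult_carrier_mat[OF Qi_carrier(1) rho_carrier] Qm_carrier(1)])
      then show ?thesis unfolding in1 by simp
    qed
    have c0: "?M $$ (i, 0) = 0" if "1 \<le> i" "i < 2*n+2" for i
    proof -
      have u0: "Qm n d *\<^sub>v unit_vec (2*n+2) 0 = d \<cdot>\<^sub>v unit_vec (2*n+2) (2*n+1)"
        using Qm_unit[of 0 n d] by simp
      have z: "(0::nat) < 2*n+2" by simp
      have i1: "i - 1 \<le> 2*n" "i - 1 < 2*n+2" using that by auto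
      show ?thesis using that i1 unfolding M_entry[OF g d that z, unfolded u0]
        by (simp add: pr_index)
    qed
    have cj: "?M $$ (i, j) = 1 * taut_mat n (1\<^sub>m (2*n) *\<^sub>v fst g) $$ (i - 1, j - 1)"
      if "1 \<le> i" "i < 2*n+2" "1 \<le> j" "j < 2*n+2" for i j
    proof -
      have "?M $$ (i, j) = pr n a (ev n a g) (unit_vec (2*n+2) (j-1)) $ (i-1)"
      proof -
        have uj: "Qm n d *\<^sub>v unit_vec (2*n+2) j = unit_vec (2*n+2) (j-1)"
          using Qm_unit[of j n d] that by simp
        show ?thesis unfolding M_entry[OF g d that(1,2) that(4), unfolded uj] ..
      qed
      also have "\<dots> = taut_mat n (1\<^sub>m (2*n) *\<^sub>v fst g) $$ (i - 1, j - 1)"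
      proof -
        define p where "p = i - 1"
        define r where "r = j - 1"
        have p: "p \<le> 2*n" "p < 2*n+2" "p < 2*n+1" and r: "r \<le> 2*n" "r < 2*n+2" "r < 2*n+1"
          using that by (auto simp: p_def r_def)
        have w1: "1\<^sub>m (2*n) *\<^sub>v fst g = w" using w by (simp add: gw)
        have T: "taut_mat n (1\<^sub>m (2*n) *\<^sub>v fst g) $$ (p, r) = (if p = r then 1 else if r = 0 \<and> 1 \<le> p then w $ (p-1) else 0)"
          unfolding w1 taut_mat_def using p r by simp
        have P: "pr n a (ev n a g) (unit_vec (2*n+2) r) $ p = (if p = 0 then (if r = 0 then 1 else 0) else (if p = r then 1 else 0) + (if r = 0 then ev n a g $ p else 0))"
          using p r by (simp add: pr_index)
        have E: "1 \<le> p \<Longrightarrow> ev n a g $ p = w $ (p-1)" using p by (simp add: ev_index gw)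
        show ?thesis unfolding p_def[symmetric] r_def[symmetric] T P using E by auto
      qed
      finally show ?thesis by simp
    qed
    show "\<exists>M\<in>carrier_mat (2*n+2) (2*n+2). \<exists>c. c \<noteq> 0 \<and> rho n a g * Qm n d = Qm n d * M \<and>
            (\<forall>i. 1 \<le> i \<and> i < 2*n+2 \<longrightarrow> M $$ (i, 0) = 0) \<and>
            (\<forall>i j. 1 \<le> i \<and> i < 2*n+2 \<and> 1 \<le> j \<and> j < 2*n+2 \<longrightarrow>
                 M $$ (i, j) = c * taut_mat n (1\<^sub>m (2*n) *\<^sub>v fst g) $$ (i - 1, j - 1))"
    proof (intro bexI[OF _ Mc] exI[of _ 1] conjI allI impI)
      fix i j assume "1 \<le> i \<and> i < 2*n+2 \<and> 1 \<le> j \<and> j < 2*n+2"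
      then show "?M $$ (i, j) = 1 * taut_mat n (1\<^sub>m (2*n) *\<^sub>v fst g) $$ (i - 1, j - 1)"
        using cj by blast
    next
      fix i assume "1 \<le> i \<and> i < 2*n+2"
      then show "?M $$ (i, 0) = 0" using c0 by blast
    qed (use eq in simp_all)
  qed
qed


lemma taut_alg: "tautological_algebra n (assoc_algebra n (rho n a))"
proof -
  have T: "\<forall>v\<in>carrier_vec (2*n+2). unit_vec (2*n+2) 0 \<bullet> v = 0 \<longrightarrow> (\<exists>c. rho n a (heis_T n) *\<^sub>v v = c \<cdot>\<^sub>v v)"
  proof (intro ballI impI)
    fix v :: "complex vec" assume v: "v \<in> carrier_vec (2*n+2)" and "unit_vec (2*n+2) 0 \<bullet> v = 0"
    hence v0: "v $ 0 = 0" by simp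
    show "\<exists>c. rho n a (heis_T n) *\<^sub>v v = c \<cdot>\<^sub>v v"
      by (rule exI[of _ 1]) (use rho_T_fix[OF v v0] v in \<open>simp\<close>)
  qed
  have B: "\<forall>pt\<in>carrier_vec (2*n+2). unit_vec (2*n+2) 0 \<bullet> pt \<noteq> 0 \<longrightarrow>
           boundary_reps n (rho n a) pt \<noteq> {} \<and>
           (\<forall>vh\<in>boundary_reps n (rho n a) pt. induced_tautological n (rho n a) vh)"
  proof (intro ballI impI conjI)
    fix pt :: "complex vec" assume pt: "pt \<in> carrier_vec (2*n+2)" and "unit_vec (2*n+2) 0 \<bullet> pt \<noteq> 0"
    hence p0: "pt $ 0 \<noteq> 0" by simp
    show "boundary_reps n (rho n a) pt \<noteq> {}" using eL_boundary[OF pt p0] by blast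
    fix vh assume "vh \<in> boundary_reps n (rho n a) pt"
    then obtain d where "d \<noteq> 0" "vh = d \<cdot>\<^sub>v unit_vec (2*n+2) (2*n+1)"
      using boundary_form[OF pt p0] by blast
    then show "induced_tautological n (rho n a) vh" using induced_taut by simp
  qed
  show ?thesis unfolding tautological_algebra_def
    using H_struct[of n a] T B by blast
qed

definition Alg :: "nat \<Rightarrow> complex \<Rightarrow> complex mat set" where
  "Alg n a = {Lm n a x | x. x \<in> carrier_vec (2*n+2)}"

lemma assoc_sub: "assoc_algebra n (rho n a) \<subseteq> Alg n a"
proof
  fix A assume "A \<in> assoc_algebra n (rho n a)"
  then show "A \<in> Alg n a" unfolding assoc_algebra_def
  proof (induction rule: gen_alg.induct)
    case ga_one
    show ?case unfolding Alg_def using Lm_one[of n a, symmetric] unit_vec_carrier by blast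
  next
    case (ga_gen A)
    then obtain c g where A: "A = c \<cdot>\<^sub>m rho n a g" by blast
    have "A = Lm n a (c \<cdot>\<^sub>v ev n a g)" unfolding A rho_def by (rule Lm_smult[OF ev_carrier(1)])
    then show ?case unfolding Alg_def by (metis (mono_tags, lifting) CollectI smult_carrier_vec ev_carrier(1))
  next
    case (ga_add A B)
    then obtain x y where "A = Lm n a x" "B = Lm n a y" "x \<in> carrier_vec (2*n+2)" "y \<in> carrier_vec (2*n+2)"
      unfolding Alg_def by blast
    then show ?case unfolding Alg_def using Lm_add[of x n y a] by (metis (mono_tags, lifting) CollectI add_carrier_vec)
  next
    case (ga_mult A B)
    then obtain x y where "A = Lm n a x" "B = Lm n a y" "x \<in> carrier_vec (2*n+2)" "y \<in> carrier_vec (2*n+2)"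
      unfolding Alg_def by blast
    then show ?case unfolding Alg_def using Lm_mult[of y n a x] pr_carrier(1) by blast
  next
    case (ga_smult A c)
    then obtain x where "A = Lm n a x" "x \<in> carrier_vec (2*n+2)"
      unfolding Alg_def by blast
    then show ?case unfolding Alg_def using Lm_smult[of x n c a] by (metis (mono_tags, lifting) CollectI smult_carrier_vec)
  qed
qed

lemma sq_unit: "p < 2*n \<Longrightarrow> sq n (unit_vec (2*n) p) = 0"
  unfolding sq_def by (intro sum.neutral) auto

lemma E_in:
  assumes p: "1 \<le> p" "p \<le> 2*n"
  shows "Lm n a (unit_vec (2*n+2) p) \<in> assoc_algebra n (rho n a)"
proof -
  let ?g = "(unit_vec (2*n) (p-1) :: complex vec, 0::complex)"
  have g: "?g \<in> heis n" by (simp add: heis_def)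
  have G: "rho n a ?g \<in> assoc_algebra n (rho n a)"
  proof -
    have "1 \<cdot>\<^sub>m rho n a ?g \<in> {c \<cdot>\<^sub>m rho n a g | c g. c \<noteq> 0 \<and> g \<in> heis n}"
      by (rule CollectI, rule exI[of _ "1::complex"], rule exI[of _ ?g]) (intro conjI refl g; simp)
    hence "1 \<cdot>\<^sub>m rho n a ?g \<in> assoc_algebra n (rho n a)" unfolding assoc_algebra_def by (rule gen_alg.ga_gen)
    thus ?thesis by simp
  qed
  have O: "(-1) \<cdot>\<^sub>m 1\<^sub>m (2*n+2) \<in> assoc_algebra n (rho n a)"
    unfolding assoc_algebra_def by (intro gen_alg.ga_smult gen_alg.ga_one)
  have evg: "ev n a ?g + (-1) \<cdot>\<^sub>v unit_vec (2*n+2) 0 = unit_vec (2*n+2) p"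
  proof (rule eq_vecI)
    fix i assume "i < dim_vec (unit_vec (2*n+2) p :: complex vec)"
    hence i: "i < 2*n+2" by simp
    show "(ev n a ?g + (-1) \<cdot>\<^sub>v unit_vec (2*n+2) 0) $ i = unit_vec (2*n+2) p $ i"
      using i p by (auto simp: ev_index sq_unit)
  qed simp
  have "rho n a ?g + (-1) \<cdot>\<^sub>m 1\<^sub>m (2*n+2) = Lm n a (unit_vec (2*n+2) p)"
  proof -
    have "(-1) \<cdot>\<^sub>m 1\<^sub>m (2*n+2) = Lm n a ((-1) \<cdot>\<^sub>v unit_vec (2*n+2) 0)"
      unfolding Lm_one[of n a, symmetric] by (rule Lm_smult[OF unit_vec_carrier])
    hence "rho n a ?g + (-1) \<cdot>\<^sub>m 1\<^sub>m (2*n+2) = Lm n a (ev n a ?g) + Lm n a ((-1) \<cdot>\<^sub>v unit_vec (2*n+2) 0)"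
      unfolding rho_def by (simp only:)
    also have "\<dots> = Lm n a (ev n a ?g + (-1) \<cdot>\<^sub>v unit_vec (2*n+2) 0)"
      by (rule Lm_add[OF ev_carrier(1) smult_carrier_vec[THEN iffD2, OF unit_vec_carrier]])
    finally have "rho n a ?g + (-1) \<cdot>\<^sub>m 1\<^sub>m (2*n+2) = Lm n a (ev n a ?g + (-1) \<cdot>\<^sub>v unit_vec (2*n+2) 0)" .
    thus ?thesis unfolding evg .
  qed
  moreover have "rho n a ?g + (-1) \<cdot>\<^sub>m 1\<^sub>m (2*n+2) \<in> assoc_algebra n (rho n a)"
    using G O unfolding assoc_algebra_def by (rule gen_alg.ga_add)
  ultimately show ?thesis by simp
qed


definition propP :: "complex mat set \<Rightarrow> complex \<Rightarrow> bool" where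
  "propP A \<mu> \<longleftrightarrow> (\<exists>x\<in>A. x*x*x = 0 \<cdot>\<^sub>m x \<and> (\<exists>y\<in>A. y*y*y = 0 \<cdot>\<^sub>m y \<and> x*y \<noteq> 0 \<cdot>\<^sub>m (x*y)) \<and>
      (\<forall>z\<in>A. z*z*z = 0 \<cdot>\<^sub>m z \<longrightarrow> x*z = \<mu> \<cdot>\<^sub>m (z*x)))"

lemma propP_transfer:
  assumes iso: "alg_iso N A B" and mc: "\<And>x y. x \<in> A \<Longrightarrow> y \<in> A \<Longrightarrow> x * y \<in> A"
    and sc: "\<And>c x. x \<in> A \<Longrightarrow> c \<cdot>\<^sub>m x \<in> A" and P: "propP A \<mu>"
  shows "propP B \<mu>"
proof -
  obtain f where bij: "bij_betw f A B" and hom: "\<forall>x\<in>A. \<forall>y\<in>A. f (x + y) = f x + f y \<and> f (x * y) = f x * f y"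
    and hs: "\<forall>c. \<forall>x\<in>A. f (c \<cdot>\<^sub>m x) = c \<cdot>\<^sub>m f x"
    using iso unfolding alg_iso_def by blast
  have inj: "inj_on f A" and img: "f ` A = B" using bij by (auto simp: bij_betw_def)
  have fm: "f (x * y) = f x * f y" if "x \<in> A" "y \<in> A" for x y using hom that by blast
  have fs: "f (c \<cdot>\<^sub>m x) = c \<cdot>\<^sub>m f x" if "x \<in> A" for c x using hs that by blast
  have cube: "f (x*x*x) = f x * f x * f x" if "x \<in> A" for x
    using fm[OF mc[OF that that] that] fm[OF that that] by simp
  have cubeiff: "f x * f x * f x = 0 \<cdot>\<^sub>m f x \<longleftrightarrow> x*x*x = 0 \<cdot>\<^sub>m x" if x: "x \<in> A" for x
  proof -
    have "f x * f x * f x = 0 \<cdot>\<^sub>m f x \<longleftrightarrow> f (x*x*x) = f (0 \<cdot>\<^sub>m x)" using cube[OF x] fs[OF x] by simp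
    also have "\<dots> \<longleftrightarrow> x*x*x = 0 \<cdot>\<^sub>m x"
      using inj_on_eq_iff[OF inj mc[OF mc[OF x x] x] sc[OF x]] .
    finally show ?thesis .
  qed
  obtain x where x: "x \<in> A" and x3: "x*x*x = 0 \<cdot>\<^sub>m x"
    and yex: "\<exists>y\<in>A. y*y*y = 0 \<cdot>\<^sub>m y \<and> x*y \<noteq> 0 \<cdot>\<^sub>m (x*y)"
    and zall: "\<forall>z\<in>A. z*z*z = 0 \<cdot>\<^sub>m z \<longrightarrow> x*z = \<mu> \<cdot>\<^sub>m (z*x)"
    using P unfolding propP_def by blast
  obtain y where y: "y \<in> A" and y3: "y*y*y = 0 \<cdot>\<^sub>m y" and xy: "x*y \<noteq> 0 \<cdot>\<^sub>m (x*y)" using yex by blast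
  have fx: "f x \<in> B" "f y \<in> B" using img x y by auto
  have "f x * f x * f x = 0 \<cdot>\<^sub>m f x" using cubeiff[OF x] x3 by simp
  moreover have "f y * f y * f y = 0 \<cdot>\<^sub>m f y" using cubeiff[OF y] y3 by simp
  moreover have "f x * f y \<noteq> 0 \<cdot>\<^sub>m (f x * f y)"
  proof
    assume "f x * f y = 0 \<cdot>\<^sub>m (f x * f y)"
    hence "f (x*y) = f (0 \<cdot>\<^sub>m (x*y))" using fm[OF x y] fs[OF mc[OF x y]] by simp
    hence "x*y = 0 \<cdot>\<^sub>m (x*y)" using inj_on_eq_iff[OF inj mc[OF x y] sc[OF mc[OF x y]]] by simp
    thus False using xy by simp
  qed
  moreover have "\<forall>z'\<in>B. z'*z'*z' = 0 \<cdot>\<^sub>m z' \<longrightarrow> f x * z' = \<mu> \<cdot>\<^sub>m (z' * f x)"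
  proof (intro ballI impI)
    fix z' assume "z' \<in> B" and z3': "z'*z'*z' = 0 \<cdot>\<^sub>m z'"
    then obtain z where z: "z \<in> A" and zz: "z' = f z" using img by blast
    have "z*z*z = 0 \<cdot>\<^sub>m z" using cubeiff[OF z] z3' zz by simp
    hence "x*z = \<mu> \<cdot>\<^sub>m (z*x)" using zall z by blast
    hence "f (x*z) = f (\<mu> \<cdot>\<^sub>m (z*x))" by simp
    thus "f x * z' = \<mu> \<cdot>\<^sub>m (z' * f x)" using fm[OF x z] fm[OF z x] fs[OF mc[OF z x]] zz by simp
  qed
  ultimately show ?thesis unfolding propP_def using fx by blast
qed

lemma assoc_mc: "x \<in> assoc_algebra n \<rho> \<Longrightarrow> y \<in> assoc_algebra n \<rho> \<Longrightarrow> x * y \<in> assoc_algebra n \<rho>"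
  unfolding assoc_algebra_def by (rule gen_alg.ga_mult)

lemma assoc_sc: "x \<in> assoc_algebra n \<rho> \<Longrightarrow> c \<cdot>\<^sub>m x \<in> assoc_algebra n \<rho>"
  unfolding assoc_algebra_def by (rule gen_alg.ga_smult)

lemma alg_iso_refl: "alg_iso N A A"
  unfolding alg_iso_def by (rule exI[of _ id]) auto


lemma Lm_cube: "x \<in> carrier_vec (2*n+2) \<Longrightarrow> Lm n a x * Lm n a x * Lm n a x = Lm n a (pr n a (pr n a x x) x)"
  by (simp add: Lm_mult)

lemma Lm_zero: "x \<in> carrier_vec (2*n+2) \<Longrightarrow> c \<cdot>\<^sub>m Lm n a x = Lm n a (c \<cdot>\<^sub>v x)"
  by (rule Lm_smult)

lemma cube0:
  assumes x: "x \<in> carrier_vec (2*n+2)" and c: "Lm n a x * Lm n a x * Lm n a x = 0 \<cdot>\<^sub>m Lm n a x"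
  shows "x $ 0 = 0"
proof -
  have "pr n a (pr n a x x) x = 0 \<cdot>\<^sub>v x"
    using c unfolding Lm_cube[OF x] Lm_zero[OF x]
    by (rule Lm_inj[OF pr_carrier(1) smult_carrier_vec[THEN iffD2, OF x]])
  hence "pr n a (pr n a x x) x $ 0 = (0 \<cdot>\<^sub>v x) $ 0" by simp
  hence "x$0 * x$0 * x$0 = 0" using x by (simp add: pr_index)
  thus ?thesis by simp
qed

lemma cube_if:
  assumes x: "x \<in> carrier_vec (2*n+2)" and x0: "x $ 0 = 0"
  shows "Lm n a x * Lm n a x * Lm n a x = 0 \<cdot>\<^sub>m Lm n a x"
proof -
  have "pr n a (pr n a x x) x = 0 \<cdot>\<^sub>v x"
  proof (rule eq_vecI)
    fix i assume "i < dim_vec (0 \<cdot>\<^sub>v x)"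
    hence i: "i < 2*n+2" using x by simp
    show "pr n a (pr n a x x) x $ i = (0 \<cdot>\<^sub>v x) $ i"
      using i x x0 by (simp add: pr_index Bf_pr1)
  qed (use x in simp)
  thus ?thesis unfolding Lm_cube[OF x] Lm_zero[OF x] by simp
qed

lemma pr_last: "u $ 0 = 0 \<Longrightarrow> v $ 0 = 0 \<Longrightarrow> pr n a u v $ (2*n+1) = Bf n a u v"
  by (simp add: pr_index)

lemma pr_last': "u $ 0 = 0 \<Longrightarrow> v $ 0 = 0 \<Longrightarrow> pr n a u v $ Suc (2*n) = Bf n a u v"
  by (simp add: pr_index)

lemma Bf_xR: "q0 < n \<Longrightarrow> Bf n a x (unit_vec (2*n+2) (n+q0+1)) = a * x$(q0+1)"
proof -
  assume q: "q0 < n"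
  have "(\<Sum>q<n. x$(q+1) * unit_vec (2*n+2) (n+q0+1) $ (n+q+1)) = (\<Sum>q<n. if q = q0 then x$(q+1) else 0)"
    by (rule sum.cong) (auto simp: unit_vec_def)
  moreover have "(\<Sum>q<n. x$(n+q+1) * unit_vec (2*n+2) (n+q0+1) $ (q+1)) = 0"
    using q by (intro sum.neutral) (auto simp: unit_vec_def)
  ultimately show ?thesis using q by (simp add: Bf_def)
qed

lemma Bf_Rx: "q0 < n \<Longrightarrow> Bf n a (unit_vec (2*n+2) (n+q0+1)) x = (a-1) * x$(q0+1)"
proof -
  assume q: "q0 < n"
  have "(\<Sum>q<n. unit_vec (2*n+2) (n+q0+1) $ (n+q+1) * x$(q+1)) = (\<Sum>q<n. if q = q0 then x$(q+1) else 0)"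
    by (rule sum.cong) (auto simp: unit_vec_def)
  moreover have "(\<Sum>q<n. unit_vec (2*n+2) (n+q0+1) $ (q+1) * x$(n+q+1)) = 0"
    using q by (intro sum.neutral) (auto simp: unit_vec_def)
  ultimately show ?thesis using q by (simp add: Bf_def)
qed

lemma Bf_xL: "q0 < n \<Longrightarrow> Bf n a x (unit_vec (2*n+2) (q0+1)) = (a-1) * x$(n+q0+1)"
proof -
  assume q: "q0 < n"
  have "(\<Sum>q<n. x$(n+q+1) * unit_vec (2*n+2) (q0+1) $ (q+1)) = (\<Sum>q<n. if q = q0 then x$(n+q+1) else 0)"
    by (rule sum.cong) (auto simp: unit_vec_def)
  moreover have "(\<Sum>q<n. x$(q+1) * unit_vec (2*n+2) (q0+1) $ (n+q+1)) = 0"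
    using q by (intro sum.neutral) (auto simp: unit_vec_def)
  ultimately show ?thesis using q by (simp add: Bf_def)
qed

lemma Bf_Lx: "q0 < n \<Longrightarrow> Bf n a (unit_vec (2*n+2) (q0+1)) x = a * x$(n+q0+1)"
proof -
  assume q: "q0 < n"
  have "(\<Sum>q<n. unit_vec (2*n+2) (q0+1) $ (q+1) * x$(n+q+1)) = (\<Sum>q<n. if q = q0 then x$(n+q+1) else 0)"
    by (rule sum.cong) (auto simp: unit_vec_def)
  moreover have "(\<Sum>q<n. unit_vec (2*n+2) (q0+1) $ (n+q+1) * x$(q+1)) = 0"
    using q by (intro sum.neutral) (auto simp: unit_vec_def)
  ultimately show ?thesis using q by (simp add: Bf_def)
qed


lemma unit_vec0: "1 \<le> p \<Longrightarrow> p < 2*n+2 \<Longrightarrow> (unit_vec (2*n+2) p :: complex vec) $ 0 = 0"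
  by simp

lemma Lm_comm_rel:
  assumes x: "x \<in> carrier_vec (2*n+2)" and z: "z \<in> carrier_vec (2*n+2)"
    and x0: "x $ 0 = 0" and z0: "z $ 0 = 0"
    and r: "Lm n a x * Lm n a z = \<mu> \<cdot>\<^sub>m (Lm n a z * Lm n a x)"
  shows "Bf n a x z = \<mu> * Bf n a z x"
proof -
  have "Lm n a (pr n a x z) = Lm n a (\<mu> \<cdot>\<^sub>v pr n a z x)"
    using r unfolding Lm_mult[OF z] Lm_mult[OF x] Lm_smult[OF pr_carrier(1)] .
  hence e: "pr n a x z = \<mu> \<cdot>\<^sub>v pr n a z x"
    by (rule Lm_inj[OF pr_carrier(1) smult_carrier_vec[THEN iffD2, OF pr_carrier(1)]])
  have "pr n a x z $ (2*n+1) = (\<mu> \<cdot>\<^sub>v pr n a z x) $ (2*n+1)" using e by simp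
  thus ?thesis using x0 z0 by (simp add: pr_last')
qed

lemma nec:
  assumes sub: "A \<subseteq> Alg n a"
    and E: "\<And>p. 1 \<le> p \<Longrightarrow> p \<le> 2*n \<Longrightarrow> Lm n a (unit_vec (2*n+2) p) \<in> A"
    and P: "propP A \<mu>"
  shows "a = \<mu> * (a - 1) \<or> a - 1 = \<mu> * a"
proof -
  obtain x where xA: "x \<in> A" and x3: "x*x*x = 0 \<cdot>\<^sub>m x"
    and yex: "\<exists>y\<in>A. y*y*y = 0 \<cdot>\<^sub>m y \<and> x*y \<noteq> 0 \<cdot>\<^sub>m (x*y)"
    and zall: "\<forall>z\<in>A. z*z*z = 0 \<cdot>\<^sub>m z \<longrightarrow> x*z = \<mu> \<cdot>\<^sub>m (z*x)"
    using P unfolding propP_def by blast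
  obtain y where yA: "y \<in> A" and y3: "y*y*y = 0 \<cdot>\<^sub>m y" and xy: "x*y \<noteq> 0 \<cdot>\<^sub>m (x*y)" using yex by blast
  obtain xv where xv: "xv \<in> carrier_vec (2*n+2)" and xe: "x = Lm n a xv" using xA sub unfolding Alg_def by blast
  obtain yv where yv: "yv \<in> carrier_vec (2*n+2)" and ye: "y = Lm n a yv" using yA sub unfolding Alg_def by blast
  have x0: "xv $ 0 = 0" using cube0[OF xv] x3 xe by simp
  have y0: "yv $ 0 = 0" using cube0[OF yv] y3 ye by simp
  have "\<exists>m. 1 \<le> m \<and> m \<le> 2*n \<and> xv $ m \<noteq> 0"
  proof (rule ccontr)
    assume "\<not> ?thesis"
    hence xm: "\<And>m. 1 \<le> m \<Longrightarrow> m \<le> 2*n \<Longrightarrow> xv $ m = 0" by blast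
    have B0: "Bf n a xv yv = 0"
    proof -
      have "(\<Sum>q<n. xv$(q+1) * yv$(n+q+1)) = 0" by (rule sum.neutral) (auto simp: xm)
      moreover have "(\<Sum>q<n. xv$(n+q+1) * yv$(q+1)) = 0" by (rule sum.neutral) (auto simp: xm)
      ultimately show ?thesis by (simp add: Bf_def)
    qed
    have "pr n a xv yv = 0 \<cdot>\<^sub>v pr n a xv yv"
    proof (rule eq_vecI)
      fix i assume "i < dim_vec (0 \<cdot>\<^sub>v pr n a xv yv)"
      hence i: "i < 2*n+2" by simp
      show "pr n a xv yv $ i = (0 \<cdot>\<^sub>v pr n a xv yv) $ i"
        using i x0 y0 B0 xm[of i] by (simp add: pr_index)
    qed simp
    hence "x * y = 0 \<cdot>\<^sub>m (x * y)"
      unfolding xe ye Lm_mult[OF yv] Lm_smult[OF pr_carrier(1)] by simp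
    thus False using xy by simp
  qed
  then obtain m where m: "1 \<le> m" "m \<le> 2*n" and xm: "xv $ m \<noteq> 0" by blast
  have rel: "Bf n a xv (unit_vec (2*n+2) p) = \<mu> * Bf n a (unit_vec (2*n+2) p) xv" if p: "1 \<le> p" "p \<le> 2*n" for p
  proof -
    have zA: "Lm n a (unit_vec (2*n+2) p) \<in> A" using E[OF p] .
    have z0: "(unit_vec (2*n+2) p :: complex vec) $ 0 = 0" using p by simp
    have "Lm n a (unit_vec (2*n+2) p) * Lm n a (unit_vec (2*n+2) p) * Lm n a (unit_vec (2*n+2) p) = 0 \<cdot>\<^sub>m Lm n a (unit_vec (2*n+2) p)"
      by (rule cube_if[OF unit_vec_carrier z0])
    hence "x * Lm n a (unit_vec (2*n+2) p) = \<mu> \<cdot>\<^sub>m (Lm n a (unit_vec (2*n+2) p) * x)" using zall zA by blast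
    thus ?thesis unfolding xe by (rule Lm_comm_rel[OF xv unit_vec_carrier x0 z0])
  qed
  show ?thesis
  proof (cases "m \<le> n")
    case True
    define q0 where "q0 = m - 1"
    have q0: "q0 < n" "m = q0 + 1" using m True by (auto simp: q0_def)
    have "a * xv $ m = \<mu> * ((a-1) * xv $ m)"
      using rel[of "n+q0+1", unfolded Bf_xR[OF q0(1)] Bf_Rx[OF q0(1)]] q0 m by simp
    hence "(a - \<mu> * (a-1)) * xv $ m = 0" by (simp add: algebra_simps)
    hence "a = \<mu> * (a-1)" using xm by simp
    thus ?thesis by simp
  next
    case False
    define q0 where "q0 = m - n - 1"
    have q0: "q0 < n" "m = n + q0 + 1" using m False by (auto simp: q0_def)
    have "(a-1) * xv $ m = \<mu> * (a * xv $ m)"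
      using rel[of "q0+1", unfolded Bf_xL[OF q0(1)] Bf_Lx[OF q0(1)]] q0 m by simp
    hence "(a - 1 - \<mu> * a) * xv $ m = 0" by (simp add: algebra_simps)
    hence "a - 1 = \<mu> * a" using xm by simp
    thus ?thesis by simp
  qed
qed


lemma suff:
  assumes n: "n \<ge> 1" and a0: "a \<noteq> 0" and a1: "a \<noteq> 1"
  shows "propP (assoc_algebra n (rho n a)) (a / (a - 1))"
proof -
  let ?A = "assoc_algebra n (rho n a)"
  let ?e1 = "unit_vec (2*n+2) (0+1) :: complex vec"
  let ?e2 = "unit_vec (2*n+2) (n+0+1) :: complex vec"
  have q: "(0::nat) < n" using n by simp
  have xA: "Lm n a ?e1 \<in> ?A" using E_in[of "0+1" n a] n by simp
  have yA: "Lm n a ?e2 \<in> ?A" using E_in[of "n+0+1" n a] n by simp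
  have e10: "?e1 $ 0 = 0" and e20: "?e2 $ 0 = 0" by simp_all
  have x3: "Lm n a ?e1 * Lm n a ?e1 * Lm n a ?e1 = 0 \<cdot>\<^sub>m Lm n a ?e1"
    by (rule cube_if[OF unit_vec_carrier e10])
  have y3: "Lm n a ?e2 * Lm n a ?e2 * Lm n a ?e2 = 0 \<cdot>\<^sub>m Lm n a ?e2"
    by (rule cube_if[OF unit_vec_carrier e20])
  have xy: "Lm n a ?e1 * Lm n a ?e2 \<noteq> 0 \<cdot>\<^sub>m (Lm n a ?e1 * Lm n a ?e2)"
  proof
    assume "Lm n a ?e1 * Lm n a ?e2 = 0 \<cdot>\<^sub>m (Lm n a ?e1 * Lm n a ?e2)"
    hence "Lm n a (pr n a ?e1 ?e2) = Lm n a (0 \<cdot>\<^sub>v pr n a ?e1 ?e2)"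
      unfolding Lm_mult[OF unit_vec_carrier] Lm_smult[OF pr_carrier(1)] .
    hence "pr n a ?e1 ?e2 = 0 \<cdot>\<^sub>v pr n a ?e1 ?e2"
      by (rule Lm_inj[OF pr_carrier(1) smult_carrier_vec[THEN iffD2, OF pr_carrier(1)]])
    hence "pr n a ?e1 ?e2 $ (2*n+1) = (0 \<cdot>\<^sub>v pr n a ?e1 ?e2) $ (2*n+1)" by simp
    hence "Bf n a ?e1 ?e2 = 0" unfolding pr_last[OF e10 e20] by simp
    moreover have "Bf n a ?e1 ?e2 = a * ?e2 $ (n+0+1)" by (rule Bf_Lx[OF q])
    ultimately show False using a0 n by simp
  qed
  have zall: "\<forall>z\<in>?A. z*z*z = 0 \<cdot>\<^sub>m z \<longrightarrow> Lm n a ?e1 * z = (a / (a - 1)) \<cdot>\<^sub>m (z * Lm n a ?e1)"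
  proof (intro ballI impI)
    fix z assume zA: "z \<in> ?A" and z3: "z*z*z = 0 \<cdot>\<^sub>m z"
    obtain zv where zv: "zv \<in> carrier_vec (2*n+2)" and ze: "z = Lm n a zv"
      using zA assoc_sub[of n a] unfolding Alg_def by blast
    have z0: "zv $ 0 = 0" using cube0[OF zv] z3 ze by simp
    have B1: "Bf n a ?e1 zv = a * zv $ (n+0+1)" by (rule Bf_Lx[OF q])
    have B2: "Bf n a zv ?e1 = (a-1) * zv $ (n+0+1)" by (rule Bf_xL[OF q])
    have "pr n a ?e1 zv = (a / (a - 1)) \<cdot>\<^sub>v pr n a zv ?e1"
    proof (rule eq_vecI)
      fix i assume "i < dim_vec ((a / (a - 1)) \<cdot>\<^sub>v pr n a zv ?e1)"
      hence i: "i < 2*n+2" by simp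
      show "pr n a ?e1 zv $ i = ((a / (a - 1)) \<cdot>\<^sub>v pr n a zv ?e1) $ i"
      proof (cases "i = 2*n+1")
        case True
        have "pr n a ?e1 zv $ i = a * zv $ (n+0+1)" unfolding True pr_last[OF e10 z0] B1 ..
        moreover have "pr n a zv ?e1 $ i = (a-1) * zv $ (n+0+1)" unfolding True pr_last[OF z0 e10] B2 ..
        ultimately show ?thesis using i a1 by simp
      next
        case False
        then show ?thesis using i z0 by (simp add: pr_index)
      qed
    qed simp
    thus "Lm n a ?e1 * z = (a / (a - 1)) \<cdot>\<^sub>m (z * Lm n a ?e1)"
      unfolding ze Lm_mult[OF zv] Lm_mult[OF unit_vec_carrier] Lm_smult[OF pr_carrier(1)] by simp
  qed
  show ?thesis unfolding propP_def using xA yA x3 y3 xy zall by blast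
qed


definition AA :: "nat \<Rightarrow> nat \<Rightarrow> complex mat set" where
  "AA n k = assoc_algebra n (rho n (of_nat (k + 2)))"

lemma AA_noniso:
  assumes n: "n \<ge> 1" and kj: "k \<noteq> j"
  shows "\<not> alg_iso (2*n+2) (AA n k) (AA n j)"
proof
  assume iso: "alg_iso (2*n+2) (AA n k) (AA n j)"
  define ak :: complex where "ak = of_nat (k + 2)"
  define aj :: complex where "aj = of_nat (j + 2)"
  have ak0: "ak \<noteq> 0" unfolding ak_def by (simp only: of_nat_eq_0_iff)
  have ak1: "ak \<noteq> 1"
  proof
    assume "ak = 1"
    hence "(of_nat (k+2) :: complex) = of_nat 1" unfolding ak_def by simp
    hence "k + 2 = 1" by (simp only: of_nat_eq_iff)
    thus False by simp
  qed
  have d: "ak - 1 \<noteq> 0" using ak1 by simp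
  have Pk: "propP (AA n k) (ak / (ak - 1))" unfolding AA_def ak_def[symmetric] by (rule suff[OF n ak0 ak1])
  have "propP (AA n j) (ak / (ak - 1))"
  proof (rule propP_transfer[OF iso _ _ Pk])
    fix x y assume "x \<in> AA n k" "y \<in> AA n k"
    then show "x * y \<in> AA n k" unfolding AA_def by (rule assoc_mc)
  next
    fix c x assume "x \<in> AA n k"
    then show "c \<cdot>\<^sub>m x \<in> AA n k" unfolding AA_def by (rule assoc_sc)
  qed
  hence Pj: "propP (assoc_algebra n (rho n aj)) (ak / (ak - 1))" unfolding AA_def aj_def .
  have h: "aj = (ak / (ak - 1)) * (aj - 1) \<or> aj - 1 = (ak / (ak - 1)) * aj"
    by (rule nec[OF assoc_sub[of n aj] E_in Pj])
  have "ak = aj \<or> aj + ak = 1"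
  proof (cases "aj = (ak / (ak - 1)) * (aj - 1)")
    case True
    hence "aj * (ak - 1) = ak * (aj - 1)" using d by (simp add: field_simps)
    moreover have "aj * (ak - 1) - ak * (aj - 1) = ak - aj" by (simp add: algebra_simps)
    ultimately have "ak - aj = 0" by simp
    hence "ak = aj" by simp
    thus ?thesis by simp
  next
    case False
    hence "aj - 1 = (ak / (ak - 1)) * aj" using h by simp
    hence "(aj - 1) * (ak - 1) = ak * aj" using d by (simp add: field_simps)
    moreover have "(aj - 1) * (ak - 1) - ak * aj = 1 - (aj + ak)" by (simp add: algebra_simps)
    ultimately have "1 - (aj + ak) = 0" by simp
    hence "aj + ak = 1" by simp
    thus ?thesis by simp
  qed
  moreover have "aj + ak \<noteq> 1"
  proof
    assume "aj + ak = 1"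
    hence "(of_nat (j + 2 + (k + 2)) :: complex) = of_nat 1" unfolding aj_def ak_def by (simp only: of_nat_add of_nat_1)
    hence "j + 2 + (k + 2) = 1" by (simp only: of_nat_eq_iff)
    thus False by simp
  qed
  ultimately have "ak = aj" by simp
  hence "k + 2 = j + 2" unfolding ak_def aj_def by (simp only: of_nat_eq_iff)
  thus False using kj by simp
qed

theorem proposition3p10:
  fixes n :: nat
  assumes "n \<ge> 1"
  shows "\<exists>S :: complex mat set set. infinite S \<and>
           (\<forall>A\<in>S. tautological_algebra n A) \<and>
           (\<forall>A\<in>S. \<forall>B\<in>S. A \<noteq> B \<longrightarrow> \<not> alg_iso (2*n+2) A B)"
proof (intro exI conjI)
  let ?S = "range (AA n)"
  have inj: "inj (AA n)"
  proof
    fix k j assume e: "AA n k = AA n j"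
    show "k = j"
    proof (rule ccontr)
      assume "k \<noteq> j"
      hence "\<not> alg_iso (2*n+2) (AA n k) (AA n j)" by (rule AA_noniso[OF assms])
      thus False using alg_iso_refl[of "2*n+2" "AA n k"] e by simp
    qed
  qed
  show "infinite ?S"
  proof
    assume "finite ?S"
    hence "finite (UNIV :: nat set)" using finite_imageD[of "AA n" UNIV] inj by simp
    thus False by simp
  qed
  show "\<forall>A\<in>?S. tautological_algebra n A" by (auto simp: AA_def taut_alg)
  show "\<forall>A\<in>?S. \<forall>B\<in>?S. A \<noteq> B \<longrightarrow> \<not> alg_iso (2*n+2) A B"
  proof (intro ballI impI)
    fix A B assume "A \<in> ?S" "B \<in> ?S" "A \<noteq> B"
    then obtain k j where "A = AA n k" "B = AA n j" "k \<noteq> j" by blast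
    then show "\<not> alg_iso (2*n+2) A B" using AA_noniso[OF assms] by simp
  qed
qed

end
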